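(* Let $\lambda_1,\lambda_2>0$, $u^*>0$, $\delta>0$, $\varepsilon>0$ and $\beta\ge0$ with $\varepsilon\lambda_2+\beta<u^*$. Consider the system $\dot\eta_1=u^*-u-\phi_2(\eta_2)$, $\dot\eta_2=u^*-u+\phi_1(\eta_1)$ under the feedback $$u=u^*+\varepsilon\phi_2(\eta_2)+\beta\frac{\varphi(\eta)}{\sqrt{\delta^2+(\min(0,\varphi(\eta)))^2}},\qquad \varphi(\eta)=\phi_1(\eta_1)+(1+\varepsilon)\phi_2(\eta_2).$$ Then the origin $\eta=0$ of the closed-loop system is globally asymptotically stable and locally exponentially stable, and $u(t)>0$ for all $t\ge0$ along every closed-loop solution.
   Context: $\phi_1(\eta_1)=\frac1{\lambda_1}(1-e^{-\eta_1})$, $\phi_2(\eta_2)=\lambda_2(e^{\eta_2}-1)$. *)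

theory Defs
  imports "HOL-Analysis.Analysis"
begin

definition phi1 :: "real \<Rightarrow> real \<Rightarrow> real" where
  "phi1 l1 e1 = (1 / l1) * (1 - exp (- e1))"

definition phi2 :: "real \<Rightarrow> real \<Rightarrow> real" where
  "phi2 l2 e2 = l2 * (exp e2 - 1)"

definition varphi :: "real \<Rightarrow> real \<Rightarrow> real \<Rightarrow> real \<times> real \<Rightarrow> real" where
  "varphi l1 l2 eps \<eta> = phi1 l1 (fst \<eta>) + (1 + eps) * phi2 l2 (snd \<eta>)"

definition feedback :: "real \<Rightarrow> real \<Rightarrow> real \<Rightarrow> real \<Rightarrow> real \<Rightarrow> real \<Rightarrow> real \<times> real \<Rightarrow> real" where
  "feedback l1 l2 us dl eps bt \<eta> =
     us + eps * phi2 l2 (snd \<eta>)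
        + bt * varphi l1 l2 eps \<eta> / sqrt (dl\<^sup>2 + (min 0 (varphi l1 l2 eps \<eta>))\<^sup>2)"

definition closed_loop :: "real \<Rightarrow> real \<Rightarrow> real \<Rightarrow> real \<Rightarrow> real \<Rightarrow> real \<Rightarrow> real \<times> real \<Rightarrow> real \<times> real" where
  "closed_loop l1 l2 us dl eps bt \<eta> =
     (let u = feedback l1 l2 us dl eps bt \<eta>
      in (us - u - phi2 l2 (snd \<eta>), us - u + phi1 l1 (fst \<eta>)))"

definition is_solution :: "(real \<times> real \<Rightarrow> real \<times> real) \<Rightarrow> (real \<Rightarrow> real \<times> real) \<Rightarrow> bool" where
  "is_solution f x \<longleftrightarrow> (\<forall>t\<ge>0. (x has_vector_derivative f (x t)) (at t within {0..}))"

definition GAS_origin :: "(real \<times> real \<Rightarrow> real \<times> real) \<Rightarrow> bool" where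
  "GAS_origin f \<longleftrightarrow>
     (\<forall>x0. \<exists>x. is_solution f x \<and> x 0 = x0) \<and>
     (\<forall>e>0. \<exists>d>0. \<forall>x. is_solution f x \<and> norm (x 0) < d \<longrightarrow> (\<forall>t\<ge>0. norm (x t) < e)) \<and>
     (\<forall>x. is_solution f x \<longrightarrow> (x \<longlongrightarrow> 0) at_top)"

definition LES_origin :: "(real \<times> real \<Rightarrow> real \<times> real) \<Rightarrow> bool" where
  "LES_origin f \<longleftrightarrow>
     (\<exists>r>0. \<exists>M>0. \<exists>k>0. \<forall>x. is_solution f x \<and> norm (x 0) < r \<longrightarrow>
        (\<forall>t\<ge>0. norm (x t) \<le> M * exp (- k * t) * norm (x 0)))"

end

theory Submission
  imports Defs
begin


lemma exp_lip:
  fixes a b R :: real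
  assumes "\<bar>a\<bar> \<le> R" "\<bar>b\<bar> \<le> R"
  shows "\<bar>exp a - exp b\<bar> \<le> exp R * \<bar>a - b\<bar>"
proof -
  have key: "exp v - exp u \<le> exp R * (v - u)" if "u \<le> v" "v \<le> R" for u v :: real
  proof -
    have "exp (u - v) \<ge> 1 + (u - v)" by (rule exp_ge_add_one_self)
    hence "exp u \<ge> exp v * (1 + (u - v))"
      by (metis exp_add diff_add_cancel mult_left_mono exp_ge_zero mult.commute order_trans order_refl)
    hence "exp v - exp u \<le> exp v * (v - u)" by (simp add: algebra_simps)
    also have "\<dots> \<le> exp R * (v - u)" using that by (intro mult_right_mono) auto
    finally show ?thesis .
  qed
  show ?thesis
  proof (cases "a \<le> b")
    case True
    with key[of a b] assms show ?thesis by auto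
  next
    case False
    with key[of b a] assms show ?thesis by auto
  qed
qed

lemma exp_taylor1:
  fixes y R :: real
  assumes "\<bar>y\<bar> \<le> R"
  shows "exp (-R) * \<bar>y\<bar> \<le> \<bar>exp y - 1\<bar>" "\<bar>exp y - 1\<bar> \<le> exp R * \<bar>y\<bar>" "(exp y - 1) * y \<ge> 0"
proof -
  obtain t where t: "\<bar>t\<bar> \<le> \<bar>y\<bar>" "exp y = 1 + exp t * y"
    using Maclaurin_exp_le[of y 1] by auto
  have e1: "exp (-R) \<le> exp t" using t assms by auto
  have e2: "exp t \<le> exp R" using t assms by auto
  have eq: "\<bar>exp y - 1\<bar> = exp t * \<bar>y\<bar>" using t by (simp add: abs_mult)
  show "exp (-R) * \<bar>y\<bar> \<le> \<bar>exp y - 1\<bar>" unfolding eq by (intro mult_right_mono e1) auto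
  show "\<bar>exp y - 1\<bar> \<le> exp R * \<bar>y\<bar>" unfolding eq by (intro mult_right_mono e2) auto
  show "(exp y - 1) * y \<ge> 0" using t by (simp add: mult.assoc flip: power2_eq_square)
qed

lemma exp_taylor2:
  fixes y R :: real
  assumes "\<bar>y\<bar> \<le> R"
  shows "exp (-R) * y\<^sup>2 / 2 \<le> exp y - 1 - y" "exp y - 1 - y \<le> exp R * y\<^sup>2 / 2"
proof -
  obtain t where t: "\<bar>t\<bar> \<le> \<bar>y\<bar>" "exp y = 1 + y + exp t / 2 * y\<^sup>2"
    using Maclaurin_exp_le[of y 2] by (auto simp: numeral_2_eq_2)
  have e1: "exp (-R) \<le> exp t" using t assms by auto
  have e2: "exp t \<le> exp R" using t assms by auto
  have eq: "exp y - 1 - y = exp t * y\<^sup>2 / 2" using t by simp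
  show "exp (-R) * y\<^sup>2 / 2 \<le> exp y - 1 - y" unfolding eq
    by (intro divide_right_mono mult_right_mono e1) auto
  show "exp y - 1 - y \<le> exp R * y\<^sup>2 / 2" unfolding eq
    by (intro divide_right_mono mult_right_mono e2) auto
qed

lemma exp_ge_2x: "exp (z::real) \<ge> 2 * z"
proof -
  have a: "exp (z/2) \<ge> 1 + z/2" by (rule exp_ge_add_one_self)
  have b: "exp z = exp (z/2) * exp (z/2)" by (simp flip: exp_add)
  show ?thesis
  proof (cases "z \<le> 0")
    case True then show ?thesis by (smt (verit) exp_gt_zero)
  next
    case False
    hence "(1 + z/2) * (1 + z/2) \<le> exp (z/2) * exp (z/2)" using a by (intro mult_mono) auto
    moreover have "2 * z \<le> (1 + z/2) * (1 + z/2)"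
    proof -
      have "0 \<le> (1 - z/2) * (1 - z/2)" by simp
      thus ?thesis by (simp add: algebra_simps)
    qed
    ultimately show ?thesis using b by linarith
  qed
qed


definition sat :: "real \<Rightarrow> real \<Rightarrow> real" where
  "sat dl v = v / sqrt (dl\<^sup>2 + (min 0 v)\<^sup>2)"

lemma closed_loop_eq:
  "closed_loop l1 l2 us dl eps bt \<eta> =
    (-(1+eps) * phi2 l2 (snd \<eta>) - bt * sat dl (varphi l1 l2 eps \<eta>),
     phi1 l1 (fst \<eta>) - eps * phi2 l2 (snd \<eta>) - bt * sat dl (varphi l1 l2 eps \<eta>))"
  unfolding closed_loop_def feedback_def sat_def Let_def
  by (simp add: algebra_simps)

lemma feedback_eq:
  "feedback l1 l2 us dl eps bt \<eta> = us + eps * phi2 l2 (snd \<eta>) + bt * sat dl (varphi l1 l2 eps \<eta>)"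
  unfolding feedback_def sat_def by simp

lemma sat_nonneg_mult: "dl > 0 \<Longrightarrow> sat dl v * v \<ge> 0"
proof -
  have "sat dl v * v = (v * v) / sqrt (dl\<^sup>2 + (min 0 v)\<^sup>2)" unfolding sat_def by simp
  also have "\<dots> \<ge> 0" by (intro divide_nonneg_nonneg) auto
  finally show ?thesis .
qed

lemma sat_sqr: assumes "dl > 0" shows "dl * (sat dl v)\<^sup>2 \<le> sat dl v * v"
proof -
  define D where "D = sqrt (dl\<^sup>2 + (min 0 v)\<^sup>2)"
  have D: "D \<ge> dl" unfolding D_def by (metis add_0_right add_left_mono real_le_rsqrt zero_le_power2 abs_of_pos assms order.refl real_sqrt_abs real_sqrt_le_mono)
  have Dp: "D > 0" using D assms by linarith
  have sd: "sat dl v = v / D" unfolding sat_def D_def ..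
  have "dl * (sat dl v)\<^sup>2 = dl * v\<^sup>2 / D\<^sup>2" unfolding sd by (simp add: power_divide)
  also have "\<dots> \<le> D * v\<^sup>2 / D\<^sup>2" using D Dp by (intro divide_right_mono mult_right_mono) auto
  also have "\<dots> = sat dl v * v" unfolding sd using Dp by (simp add: power2_eq_square field_simps)
  finally show ?thesis .
qed

lemma sat_gt: assumes "dl > 0" shows "sat dl v > -1"
proof (cases "v \<ge> 0")
  case True thus ?thesis unfolding sat_def using assms by (smt (verit) divide_nonneg_nonneg real_sqrt_ge_zero zero_le_power2)
next
  case False
  hence m: "min 0 v = v" by simp
  have "sqrt (dl\<^sup>2 + v\<^sup>2) > sqrt (v\<^sup>2)" using assms by (intro real_sqrt_less_mono) auto
  hence "sqrt (dl\<^sup>2 + v\<^sup>2) > - v" using False by simp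
  moreover have S: "sqrt (dl\<^sup>2 + v\<^sup>2) > 0" using False by (simp add: add_nonneg_pos)
  ultimately show ?thesis unfolding sat_def m by (subst less_divide_eq) (use S in auto)
qed

lemma sat_abs: assumes "dl > 0" shows "\<bar>sat dl v\<bar> \<le> \<bar>v\<bar> / dl"
proof -
  let ?D = "sqrt (dl\<^sup>2 + (min 0 v)\<^sup>2)"
  have D: "?D \<ge> dl" by (metis add_0_right add_left_mono real_le_rsqrt zero_le_power2 abs_of_pos assms order.refl real_sqrt_abs real_sqrt_le_mono)
  show ?thesis unfolding sat_def using D assms by (simp add: abs_div frac_le abs_of_pos)
qed

lemma r_deriv:
  assumes "d > 0"
  shows "((\<lambda>x. x / sqrt (d\<^sup>2 + x\<^sup>2)) has_real_derivative d\<^sup>2 / (sqrt (d\<^sup>2 + x\<^sup>2))^3) (at x)"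
proof -
  have pos: "d\<^sup>2 + x\<^sup>2 > 0" using assms by (simp add: add_pos_nonneg)
  define S where "S = sqrt (d\<^sup>2 + x\<^sup>2)"
  have s: "S > 0" using pos unfolding S_def by simp
  have S2: "S * S = d\<^sup>2 + x\<^sup>2" unfolding S_def using pos by (simp flip: power2_eq_square)
  have d1: "((\<lambda>x. d\<^sup>2 + x\<^sup>2) has_real_derivative 2 * x) (at x)"
    by (auto intro!: derivative_eq_intros)
  have d2: "((\<lambda>x. sqrt (d\<^sup>2 + x\<^sup>2)) has_real_derivative (inverse S / 2) * (2 * x)) (at x)"
    unfolding S_def by (rule DERIV_chain2[OF DERIV_real_sqrt[OF pos] d1])
  have d3: "((\<lambda>x. x / sqrt (d\<^sup>2 + x\<^sup>2)) has_real_derivative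
      (1 * S - ((inverse S / 2) * (2 * x)) * x) / (S ^ Suc (Suc 0))) (at x)"
  proof -
    have nz: "sqrt (d\<^sup>2 + x\<^sup>2) \<noteq> 0" using s unfolding S_def by linarith
    show ?thesis using DERIV_quotient[OF DERIV_ident d2 nz] unfolding S_def .
  qed
  have eq: "(1 * S - ((inverse S / 2) * (2 * x)) * x) / (S ^ Suc (Suc 0)) = d\<^sup>2 / S^3"
  proof -
    have "(1 * S - ((inverse S / 2) * (2 * x)) * x) = (S * S - x * x) / S"
      using s by (simp add: field_simps)
    also have "\<dots> = d\<^sup>2 / S" using S2 by (simp add: power2_eq_square)
    finally show ?thesis using s by (simp add: power3_eq_cube power2_eq_square)
  qed
  show ?thesis using d3[unfolded eq] unfolding S_def .
qed

lemma r_lip: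
  assumes "d > 0" "a \<le> b"
  shows "b / sqrt (d\<^sup>2 + b\<^sup>2) - a / sqrt (d\<^sup>2 + a\<^sup>2) \<le> (b - a) / d"
proof (cases "a = b")
  case True then show ?thesis by simp
next
  case False
  hence ab: "a < b" using assms by simp
  obtain z where z: "a < z" "z < b"
    "b / sqrt (d\<^sup>2 + b\<^sup>2) - a / sqrt (d\<^sup>2 + a\<^sup>2) = (b - a) * (d\<^sup>2 / (sqrt (d\<^sup>2 + z\<^sup>2))^3)"
    using MVT2[OF ab r_deriv[OF assms(1)]] by blast
  have D: "sqrt (d\<^sup>2 + z\<^sup>2) \<ge> d" using assms(1) by (metis add_0_right add_left_mono real_le_rsqrt zero_le_power2 abs_of_pos order.refl real_sqrt_abs real_sqrt_le_mono)
  have "d^3 \<le> (sqrt (d\<^sup>2 + z\<^sup>2))^3" using D assms by (intro power_mono) auto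
  moreover have "sqrt (d\<^sup>2 + z\<^sup>2) ^ 3 > 0" by (intro zero_less_power) (use D assms in linarith)
  ultimately have "d\<^sup>2 / (sqrt (d\<^sup>2 + z\<^sup>2))^3 \<le> d\<^sup>2 / d^3" using assms by (intro divide_left_mono) auto
  also have "\<dots> = 1 / d" using assms by (simp add: power2_eq_square power3_eq_cube)
  finally have "(b - a) * (d\<^sup>2 / (sqrt (d\<^sup>2 + z\<^sup>2))^3) \<le> (b - a) * (1/d)" using ab by (intro mult_left_mono) auto
  thus ?thesis using z by simp
qed

lemma sat_mono_lip:
  assumes "dl > 0" "a \<le> b"
  shows "0 \<le> sat dl b - sat dl a \<and> sat dl b - sat dl a \<le> (b - a) / dl"
proof -
  have r_mono: "a / sqrt (dl\<^sup>2 + a\<^sup>2) \<le> b / sqrt (dl\<^sup>2 + b\<^sup>2)"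
  proof (cases "a = b")
    case False
    hence ab: "a < b" using assms by simp
    obtain z where z: "a < z" "z < b"
      "b / sqrt (dl\<^sup>2 + b\<^sup>2) - a / sqrt (dl\<^sup>2 + a\<^sup>2) = (b - a) * (dl\<^sup>2 / (sqrt (dl\<^sup>2 + z\<^sup>2))^3)"
      using MVT2[OF ab r_deriv[OF assms(1)]] by blast
    have "0 \<le> (b - a) * (dl\<^sup>2 / (sqrt (dl\<^sup>2 + z\<^sup>2))^3)" using ab by (intro mult_nonneg_nonneg divide_nonneg_nonneg) auto
    thus ?thesis using z(3) by linarith
  qed simp
  show ?thesis
  proof (cases "0 \<le> a")
    case True
    hence "sat dl a = a / dl" "sat dl b = b / dl" using assms unfolding sat_def by auto
    thus ?thesis using assms by (simp add: divide_right_mono diff_divide_distrib)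
  next
    case a: False
    hence sa: "sat dl a = a / sqrt (dl\<^sup>2 + a\<^sup>2)" unfolding sat_def by simp
    show ?thesis
    proof (cases "0 \<le> b")
      case True
      hence sb: "sat dl b = b / dl" using assms unfolding sat_def by auto
      have "\<bar>a / sqrt (dl\<^sup>2 + a\<^sup>2)\<bar> \<le> \<bar>a\<bar> / dl"
        using sat_abs[OF assms(1), of a] unfolding sa .
      moreover have "\<bar>a / sqrt (dl\<^sup>2 + a\<^sup>2)\<bar> = - a / sqrt (dl\<^sup>2 + a\<^sup>2)" "\<bar>a\<bar> = -a" using a
        by (auto simp: abs_div)
      ultimately have "- a / sqrt (dl\<^sup>2 + a\<^sup>2) \<le> - a / dl" by simp
      moreover have "- a / sqrt (dl\<^sup>2 + a\<^sup>2) \<ge> 0" using a by (intro divide_nonneg_nonneg) auto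
      moreover have "b / dl \<ge> 0" using True assms by simp
      moreover have "(b - a) / dl = b / dl - a / dl" by (simp add: diff_divide_distrib)
      ultimately show ?thesis unfolding sa sb by simp
    next
      case False
      hence sb: "sat dl b = b / sqrt (dl\<^sup>2 + b\<^sup>2)" unfolding sat_def by simp
      show ?thesis unfolding sa sb using r_lip[OF assms] r_mono by simp
    qed
  qed
qed

lemma sat_lip:
  assumes "dl > 0"
  shows "\<bar>sat dl a - sat dl b\<bar> \<le> \<bar>a - b\<bar> / dl"
proof (cases "a \<le> b")
  case True
  have "\<bar>sat dl a - sat dl b\<bar> = sat dl b - sat dl a" "\<bar>a - b\<bar> = b - a" using sat_mono_lip[OF assms True] True by auto
  then show ?thesis using sat_mono_lip[OF assms True] by simp
next
  case False
  have "\<bar>sat dl a - sat dl b\<bar> = sat dl a - sat dl b" "\<bar>a - b\<bar> = a - b" using sat_mono_lip[OF assms, of b a] False by auto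
  then show ?thesis using sat_mono_lip[OF assms, of b a] False by simp
qed


lemma key_ineq:
  fixes p q s \<phi> P Q Qm QM PM C \<mu> eps bt dl :: real
  assumes phi: "\<phi> = p + (1+eps) * q"
    and s1: "s * \<phi> \<ge> 0" and s2: "dl * s\<^sup>2 \<le> s * \<phi>"
    and Q: "Qm \<le> Q" "Q \<le> QM" and P: "0 \<le> P" "P \<le> PM" and Qm: "0 < Qm"
    and mu: "\<mu> > 0" "\<mu> * QM \<le> 1/2" "\<mu> * (1+eps) * PM \<le> eps*(1+eps)/6"
       "\<mu> * eps\<^sup>2 * QM / 2 \<le> eps*(1+eps)/6" "\<mu> \<le> 1" "bt * \<mu> * C\<^sup>2 / dl \<le> eps*(1+eps)/6"
    and C: "C = PM + (1+eps) * QM"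
    and par: "bt \<ge> 0" "eps > 0" "dl > 0"
  shows "p * (-(1+eps)*q - bt* s) + (1+eps) * q * (p - eps*q - bt* s)
         - \<mu> * (P * (-(1+eps)*q - bt* s) * q + p * Q * (p - eps*q - bt* s))
      \<le> -(\<mu> * Qm / 2) * p\<^sup>2 - eps * (1+eps) / 2 * q\<^sup>2"
proof -
  have E: "p * (-(1+eps)*q - bt* s) + (1+eps) * q * (p - eps*q - bt* s)
         - \<mu> * (P * (-(1+eps)*q - bt* s) * q + p * Q * (p - eps*q - bt* s))
     = -(bt*(s*\<phi>))*(1-\<mu>*Q) - eps*(1+eps)*q\<^sup>2 + \<mu>*(1+eps)*P*q\<^sup>2 - \<mu>*Q*p\<^sup>2
       + \<mu>*eps*Q*p*q + \<mu>*bt*((P - (1+eps)*Q)*q* s)"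
    unfolding phi by (simp add: algebra_simps power2_eq_square)
  have QMp: "QM > 0" using Q Qm by linarith
  have PMp: "PM \<ge> 0" using P by linarith
  have bsp: "bt * (s*\<phi>) \<ge> 0" using par s1 by simp
  have h1: "-(bt*(s*\<phi>))*(1-\<mu>*Q) \<le> -(bt*(s*\<phi>))/2"
  proof -
    have "\<mu>*Q \<le> \<mu>*QM" using mu Q by (intro mult_left_mono) auto
    hence "1 - \<mu>*Q \<ge> 1/2" using mu by linarith
    hence "(bt*(s*\<phi>)) * (1/2) \<le> (bt*(s*\<phi>))*(1-\<mu>*Q)" using bsp by (intro mult_left_mono) auto
    thus ?thesis by simp
  qed
  have Qp: "Q > 0" using Q Qm by linarith
  have h2: "\<mu>*eps*Q*p*q \<le> \<mu>*Q*p\<^sup>2/2 + \<mu>*eps\<^sup>2*Q*q\<^sup>2/2"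
  proof -
    have "0 \<le> (\<mu>*Q) * (p - eps*q)\<^sup>2" using mu Qp by simp
    thus ?thesis by (simp add: algebra_simps power2_eq_square)
  qed
  have h3: "\<mu>*bt*((P - (1+eps)*Q)*q* s) \<le> bt*(s*\<phi>)/4 + bt*(\<mu>\<^sup>2*C\<^sup>2*q\<^sup>2/dl)"
  proof -
    have "(1+eps)*Q \<le> (1+eps)*QM" "(1+eps)*Q \<ge> 0" using Q par Qp by (intro mult_left_mono, auto)
    hence c1: "\<bar>P - (1+eps)*Q\<bar> \<le> C" using P unfolding C by (simp add: abs_le_iff)
    have "(P - (1+eps)*Q)*q* s \<le> \<bar>P - (1+eps)*Q\<bar> * (\<bar>q\<bar> * \<bar>s\<bar>)"
      by (metis abs_ge_self abs_mult mult.assoc)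
    also have "\<dots> \<le> C * (\<bar>q\<bar> * \<bar>s\<bar>)" using c1 by (intro mult_right_mono) auto
    finally have a: "\<mu> * ((P - (1+eps)*Q)*q* s) \<le> \<mu> * C * \<bar>q\<bar> * \<bar>s\<bar>"
      using mu by (simp add: mult_left_mono mult.assoc)
    have "0 \<le> (dl*\<bar>s\<bar>/2 - \<mu>*C*\<bar>q\<bar>)\<^sup>2" by simp
    hence "dl * (\<mu> * C * \<bar>q\<bar> * \<bar>s\<bar>) \<le> dl * (dl * s\<^sup>2/4 + \<mu>\<^sup>2*C\<^sup>2*q\<^sup>2/dl)"
      using par by (simp add: algebra_simps power2_eq_square)
    hence "\<mu> * C * \<bar>q\<bar> * \<bar>s\<bar> \<le> dl * s\<^sup>2/4 + \<mu>\<^sup>2*C\<^sup>2*q\<^sup>2/dl"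
      using par by (simp add: mult_le_cancel_left_pos)
    also have "\<dots> \<le> (s*\<phi>)/4 + \<mu>\<^sup>2*C\<^sup>2*q\<^sup>2/dl" using s2 by simp
    finally have "\<mu> * ((P - (1+eps)*Q)*q* s) \<le> (s*\<phi>)/4 + \<mu>\<^sup>2*C\<^sup>2*q\<^sup>2/dl" using a by linarith
    hence "bt * (\<mu> * ((P - (1+eps)*Q)*q* s)) \<le> bt * ((s*\<phi>)/4 + \<mu>\<^sup>2*C\<^sup>2*q\<^sup>2/dl)"
      using par by (intro mult_left_mono) auto
    thus ?thesis by (simp add: algebra_simps)
  qed
  have q2: "q\<^sup>2 \<ge> 0" by simp
  have h4: "\<mu>*(1+eps)*P*q\<^sup>2 \<le> eps*(1+eps)/6 * q\<^sup>2"
  proof -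
    have "\<mu>*(1+eps)*P \<le> \<mu>*(1+eps)*PM" using mu par P by (intro mult_left_mono) auto
    thus ?thesis using mu(3) q2 by (intro mult_right_mono) auto
  qed
  have h5: "\<mu>*eps\<^sup>2*Q*q\<^sup>2/2 \<le> eps*(1+eps)/6 * q\<^sup>2"
  proof -
    have "\<mu>*eps\<^sup>2*Q/2 \<le> \<mu>*eps\<^sup>2*QM/2" using mu par Q by (intro divide_right_mono mult_left_mono) auto
    hence "\<mu>*eps\<^sup>2*Q/2 \<le> eps*(1+eps)/6" using mu(4) by linarith
    hence "(\<mu>*eps\<^sup>2*Q/2) * q\<^sup>2 \<le> eps*(1+eps)/6 * q\<^sup>2" using q2 by (intro mult_right_mono) auto
    thus ?thesis by simp
  qed
  have h6: "bt*(\<mu>\<^sup>2*C\<^sup>2*q\<^sup>2/dl) \<le> eps*(1+eps)/6 * q\<^sup>2"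
  proof -
    have "bt*(\<mu>\<^sup>2*C\<^sup>2*q\<^sup>2/dl) = \<mu> * ((bt * \<mu> * C\<^sup>2 / dl) * q\<^sup>2)" by (simp add: power2_eq_square)
    also have "\<dots> \<le> 1 * ((bt * \<mu> * C\<^sup>2 / dl) * q\<^sup>2)" using mu par by (intro mult_right_mono) auto
    also have "\<dots> \<le> eps*(1+eps)/6 * q\<^sup>2" using mult_right_mono[OF mu(6) q2] by simp
    finally show ?thesis .
  qed
  have h7: "-(\<mu>*Q*p\<^sup>2) \<le> -(\<mu>*Qm*p\<^sup>2)"
  proof -
    have "\<mu>*Qm \<le> \<mu>*Q" using mu Q by (intro mult_left_mono) auto
    hence "\<mu>*Qm*p\<^sup>2 \<le> \<mu>*Q*p\<^sup>2" by (intro mult_right_mono) auto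
    thus ?thesis by linarith
  qed
  show ?thesis unfolding E using h1 h2 h3 h4 h5 h6 h7 bsp by (simp add: field_simps)
qed


definition Wf :: "real \<Rightarrow> real \<Rightarrow> real \<Rightarrow> real \<times> real \<Rightarrow> real" where
  "Wf l1 l2 eps \<eta> = (fst \<eta> + exp (- fst \<eta>) - 1) / l1 + (1+eps) * (l2 * (exp (snd \<eta>) - 1 - snd \<eta>))"

definition Vf :: "real \<Rightarrow> real \<Rightarrow> real \<Rightarrow> real \<Rightarrow> real \<times> real \<Rightarrow> real" where
  "Vf l1 l2 eps \<mu> \<eta> = Wf l1 l2 eps \<eta> - \<mu> * phi1 l1 (fst \<eta>) * phi2 l2 (snd \<eta>)"

lemma comp_deriv:
  assumes "(x has_vector_derivative v) (at t within S)"
  shows "((\<lambda>t. fst (x t)) has_real_derivative fst v) (at t within S)"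
    "((\<lambda>t. snd (x t)) has_real_derivative snd v) (at t within S)"
proof -
  have "((\<lambda>t. fst (x t)) has_vector_derivative fst v) (at t within S)"
    using assms unfolding has_vector_derivative_def
    by (auto intro!: derivative_eq_intros)
  thus "((\<lambda>t. fst (x t)) has_real_derivative fst v) (at t within S)"
    by (simp add: has_real_derivative_iff_has_vector_derivative)
  have "((\<lambda>t. snd (x t)) has_vector_derivative snd v) (at t within S)"
    using assms unfolding has_vector_derivative_def
    by (auto intro!: derivative_eq_intros)
  thus "((\<lambda>t. snd (x t)) has_real_derivative snd v) (at t within S)"
    by (simp add: has_real_derivative_iff_has_vector_derivative)
qed

lemma W_deriv:
  assumes "(x has_vector_derivative v) (at t within S)" "l1 > 0"
  shows "((\<lambda>t. Wf l1 l2 eps (x t)) has_real_derivative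
     (phi1 l1 (fst (x t)) * fst v + (1+eps) * phi2 l2 (snd (x t)) * snd v)) (at t within S)"
proof -
  note d = comp_deriv[OF assms(1)]
  show ?thesis unfolding Wf_def phi1_def phi2_def
    using assms(2) by (auto intro!: derivative_eq_intros d simp: field_simps)
qed

lemma V_deriv:
  assumes "(x has_vector_derivative v) (at t within S)" "l1 > 0"
  shows "((\<lambda>t. Vf l1 l2 eps \<mu> (x t)) has_real_derivative
     (phi1 l1 (fst (x t)) * fst v + (1+eps) * phi2 l2 (snd (x t)) * snd v
      - \<mu> * ((exp (- fst (x t)) / l1) * fst v * phi2 l2 (snd (x t))
              + phi1 l1 (fst (x t)) * (l2 * exp (snd (x t))) * snd v))) (at t within S)"
proof -
  note d = comp_deriv[OF assms(1)]
  have w: "((\<lambda>t. Wf l1 l2 eps (x t)) has_real_derivative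
     (phi1 l1 (fst (x t)) * fst v + (1+eps) * phi2 l2 (snd (x t)) * snd v)) (at t within S)"
    by (rule W_deriv[OF assms])
  have p: "((\<lambda>t. phi1 l1 (fst (x t))) has_real_derivative (exp (- fst (x t)) / l1) * fst v) (at t within S)"
    unfolding phi1_def using assms(2) by (auto intro!: derivative_eq_intros d simp: field_simps)
  have q: "((\<lambda>t. phi2 l2 (snd (x t))) has_real_derivative (l2 * exp (snd (x t))) * snd v) (at t within S)"
    unfolding phi2_def by (auto intro!: derivative_eq_intros d simp: field_simps)
  show ?thesis unfolding Vf_def
    by (auto intro!: derivative_eq_intros w p q simp: algebra_simps)
qed


definition Vdot :: "real \<Rightarrow> real \<Rightarrow> real \<Rightarrow> real \<Rightarrow> real \<times> real \<Rightarrow> real \<times> real \<Rightarrow> real" where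
  "Vdot l1 l2 eps \<mu> \<eta> v = phi1 l1 (fst \<eta>) * fst v + (1+eps) * phi2 l2 (snd \<eta>) * snd v
      - \<mu> * ((exp (- fst \<eta>) / l1) * fst v * phi2 l2 (snd \<eta>)
              + phi1 l1 (fst \<eta>) * (l2 * exp (snd \<eta>)) * snd v)"

lemma V_deriv':
  assumes "(x has_vector_derivative v) (at t within S)" "l1 > 0"
  shows "((\<lambda>t. Vf l1 l2 eps \<mu> (x t)) has_real_derivative Vdot l1 l2 eps \<mu> (x t) v) (at t within S)"
  unfolding Vdot_def by (rule V_deriv[OF assms])

lemma sq_bounds:
  fixes a b y z :: real
  assumes "a * \<bar>y\<bar> \<le> \<bar>z\<bar>" "\<bar>z\<bar> \<le> b * \<bar>y\<bar>" "a \<ge> 0"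
  shows "a\<^sup>2 * y\<^sup>2 \<le> z\<^sup>2" "z\<^sup>2 \<le> b\<^sup>2 * y\<^sup>2"
proof -
  have "(a * \<bar>y\<bar>)\<^sup>2 \<le> \<bar>z\<bar>\<^sup>2" using assms by (intro power_mono) auto
  thus "a\<^sup>2 * y\<^sup>2 \<le> z\<^sup>2" by (simp add: power_mult_distrib)
  have "\<bar>z\<bar>\<^sup>2 \<le> (b * \<bar>y\<bar>)\<^sup>2" using assms by (intro power_mono) auto
  thus "z\<^sup>2 \<le> b\<^sup>2 * y\<^sup>2" by (simp add: power_mult_distrib)
qed

lemma pq_bounds:
  assumes "l1 > 0" "l2 > 0" "\<bar>y1\<bar> \<le> R" "\<bar>y2\<bar> \<le> R"
  shows "(exp (-R) / l1)\<^sup>2 * y1\<^sup>2 \<le> (phi1 l1 y1)\<^sup>2" "(phi1 l1 y1)\<^sup>2 \<le> (exp R / l1)\<^sup>2 * y1\<^sup>2"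
    "(l2 * exp (-R))\<^sup>2 * y2\<^sup>2 \<le> (phi2 l2 y2)\<^sup>2" "(phi2 l2 y2)\<^sup>2 \<le> (l2 * exp R)\<^sup>2 * y2\<^sup>2"
proof -
  have m: "\<bar>-y1\<bar> \<le> R" using assms by simp
  note t1 = exp_taylor1[OF m]
  have ap: "\<bar>phi1 l1 y1\<bar> = \<bar>exp (-y1) - 1\<bar> / l1" unfolding phi1_def using assms(1)
    by (simp add: abs_mult abs_minus_commute)
  have a1: "(exp (-R) / l1) * \<bar>y1\<bar> \<le> \<bar>phi1 l1 y1\<bar>" unfolding ap using t1(1) assms(1)
    by (simp add: divide_right_mono)
  have a2: "\<bar>phi1 l1 y1\<bar> \<le> (exp R / l1) * \<bar>y1\<bar>" unfolding ap using t1(2) assms(1)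
    by (simp add: divide_right_mono)
  show "(exp (-R) / l1)\<^sup>2 * y1\<^sup>2 \<le> (phi1 l1 y1)\<^sup>2" "(phi1 l1 y1)\<^sup>2 \<le> (exp R / l1)\<^sup>2 * y1\<^sup>2"
    using sq_bounds[OF a1 a2] assms(1) by auto
  note t2 = exp_taylor1[OF assms(4)]
  have bp: "\<bar>phi2 l2 y2\<bar> = l2 * \<bar>exp y2 - 1\<bar>" unfolding phi2_def using assms(2) by (simp add: abs_mult)
  have b1: "(l2 * exp (-R)) * \<bar>y2\<bar> \<le> \<bar>phi2 l2 y2\<bar>" unfolding bp using t2(1) assms(2)
    by (simp add: mult.assoc)
  have b2: "\<bar>phi2 l2 y2\<bar> \<le> (l2 * exp R) * \<bar>y2\<bar>" unfolding bp using t2(2) assms(2)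
    by (simp add: mult.assoc)
  show "(l2 * exp (-R))\<^sup>2 * y2\<^sup>2 \<le> (phi2 l2 y2)\<^sup>2" "(phi2 l2 y2)\<^sup>2 \<le> (l2 * exp R)\<^sup>2 * y2\<^sup>2"
    using sq_bounds[OF b1 b2] assms(2) by auto
qed

lemma W_bounds:
  assumes "l1 > 0" "l2 > 0" "eps > 0" "\<bar>fst \<eta>\<bar> \<le> R" "\<bar>snd \<eta>\<bar> \<le> R"
  shows "exp (-R) / (2*l1) * (fst \<eta>)\<^sup>2 + (1+eps)*l2*exp (-R)/2 * (snd \<eta>)\<^sup>2 \<le> Wf l1 l2 eps \<eta>"
    "Wf l1 l2 eps \<eta> \<le> exp R / (2*l1) * (fst \<eta>)\<^sup>2 + (1+eps)*l2*exp R/2 * (snd \<eta>)\<^sup>2"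
proof -
  have m: "\<bar>- fst \<eta>\<bar> \<le> R" using assms by simp
  note t1 = exp_taylor2[OF m] and t2 = exp_taylor2[OF assms(5)]
  have e1: "fst \<eta> + exp (- fst \<eta>) - 1 = exp (- fst \<eta>) - 1 - (- fst \<eta>)" by simp
  have f1l: "exp (-R) / (2*l1) * (fst \<eta>)\<^sup>2 \<le> (fst \<eta> + exp (- fst \<eta>) - 1) / l1"
    using divide_right_mono[OF t1(1), of l1] assms(1) unfolding e1 by (simp add: field_simps)
  have f1u: "(fst \<eta> + exp (- fst \<eta>) - 1) / l1 \<le> exp R / (2*l1) * (fst \<eta>)\<^sup>2"
    using divide_right_mono[OF t1(2), of l1] assms(1) unfolding e1 by (simp add: field_simps)
  have f2l: "(1+eps)*l2*exp (-R)/2 * (snd \<eta>)\<^sup>2 \<le> (1+eps) * (l2 * (exp (snd \<eta>) - 1 - snd \<eta>))"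
    using mult_left_mono[OF t2(1), of "(1+eps)*l2"] assms by (simp add: field_simps)
  have f2u: "(1+eps) * (l2 * (exp (snd \<eta>) - 1 - snd \<eta>)) \<le> (1+eps)*l2*exp R/2 * (snd \<eta>)\<^sup>2"
    using mult_left_mono[OF t2(2), of "(1+eps)*l2"] assms by (simp add: field_simps)
  show "exp (-R) / (2*l1) * (fst \<eta>)\<^sup>2 + (1+eps)*l2*exp (-R)/2 * (snd \<eta>)\<^sup>2 \<le> Wf l1 l2 eps \<eta>"
    unfolding Wf_def using f1l f2l by linarith
  show "Wf l1 l2 eps \<eta> \<le> exp R / (2*l1) * (fst \<eta>)\<^sup>2 + (1+eps)*l2*exp R/2 * (snd \<eta>)\<^sup>2"
    unfolding Wf_def using f1u f2u by linarith
qed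

lemma W_radial:
  assumes "l1 > 0" "l2 > 0" "eps > 0"
  shows "\<bar>fst \<eta>\<bar> \<le> l1 * Wf l1 l2 eps \<eta> + 1" "\<bar>snd \<eta>\<bar> \<le> Wf l1 l2 eps \<eta> / ((1+eps)*l2) + 1"
proof -
  define y1 where "y1 = fst \<eta>"
  define y2 where "y2 = snd \<eta>"
  have g1: "y1 + exp (-y1) - 1 \<ge> \<bar>y1\<bar> - 1"
  proof (cases "y1 \<ge> 0")
    case True then show ?thesis by (smt (verit) exp_gt_zero)
  next
    case False then show ?thesis using exp_ge_2x[of "-y1"] by linarith
  qed
  have g1': "y1 + exp (-y1) - 1 \<ge> 0" using exp_ge_add_one_self[of "-y1"] by linarith
  have g2: "exp y2 - 1 - y2 \<ge> \<bar>y2\<bar> - 1"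
  proof (cases "y2 \<ge> 0")
    case True then show ?thesis using exp_ge_2x[of y2] by linarith
  next
    case False then show ?thesis by (smt (verit) exp_gt_zero)
  qed
  have g2': "exp y2 - 1 - y2 \<ge> 0" using exp_ge_add_one_self[of y2] by linarith
  have W: "Wf l1 l2 eps \<eta> = (y1 + exp (-y1) - 1) / l1 + (1+eps) * (l2 * (exp y2 - 1 - y2))"
    unfolding Wf_def y1_def y2_def ..
  have A: "(1+eps) * (l2 * (exp y2 - 1 - y2)) \<ge> 0" using assms g2' by simp
  have B: "(y1 + exp (-y1) - 1) / l1 \<ge> 0" using assms g1' by simp
  have "l1 * Wf l1 l2 eps \<eta> \<ge> y1 + exp (-y1) - 1"
  proof -
    have "l1 * Wf l1 l2 eps \<eta> = (y1 + exp (-y1) - 1) + l1 * ((1+eps) * (l2 * (exp y2 - 1 - y2)))"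
      unfolding W using assms by (simp add: field_simps)
    thus ?thesis using A assms by simp
  qed
  thus "\<bar>fst \<eta>\<bar> \<le> l1 * Wf l1 l2 eps \<eta> + 1" using g1 unfolding y1_def by linarith
  have "Wf l1 l2 eps \<eta> / ((1+eps)*l2) \<ge> exp y2 - 1 - y2"
  proof -
    have "Wf l1 l2 eps \<eta> / ((1+eps)*l2) = (y1 + exp (-y1) - 1) / l1 / ((1+eps)*l2) + (exp y2 - 1 - y2)"
      unfolding W add_divide_distrib using assms by simp
    moreover have "(y1 + exp (-y1) - 1) / l1 / ((1+eps)*l2) \<ge> 0" by (rule divide_nonneg_pos[OF B]) (use assms in simp)
    ultimately show ?thesis by simp
  qed
  thus "\<bar>snd \<eta>\<bar> \<le> Wf l1 l2 eps \<eta> / ((1+eps)*l2) + 1" using g2 unfolding y2_def by linarith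
qed

lemma W_dot_nonpos:
  assumes "l1 > 0" "l2 > 0" "eps > 0" "dl > 0" "bt \<ge> 0"
  shows "phi1 l1 (fst \<eta>) * fst (closed_loop l1 l2 us dl eps bt \<eta>)
     + (1+eps) * phi2 l2 (snd \<eta>) * snd (closed_loop l1 l2 us dl eps bt \<eta>) \<le> 0"
proof -
  define p where "p = phi1 l1 (fst \<eta>)"
  define q where "q = phi2 l2 (snd \<eta>)"
  define s where "s = sat dl (varphi l1 l2 eps \<eta>)"
  have vp: "varphi l1 l2 eps \<eta> = p + (1+eps)*q" unfolding varphi_def p_def q_def ..
  have "p * (-(1+eps) * q - bt * s) + (1+eps) * q * (p - eps * q - bt * s)
       = - bt * (s * (p + (1+eps)*q)) - eps*(1+eps)*q\<^sup>2"
    by (simp add: algebra_simps power2_eq_square)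
  moreover have "s * (p + (1+eps)*q) \<ge> 0" using sat_nonneg_mult[OF assms(4)] unfolding s_def vp .
  moreover have "eps*(1+eps)*q\<^sup>2 \<ge> 0" using assms by simp
  moreover have "bt * (s * (p + (1+eps)*q)) \<ge> 0"
    using calculation(2) assms by simp
  ultimately have "p * (-(1+eps) * q - bt * s) + (1+eps) * q * (p - eps * q - bt * s) \<le> 0"
    by linarith
  thus ?thesis unfolding closed_loop_eq
    by (simp add: p_def[symmetric] q_def[symmetric] s_def[symmetric])
qed


lemma mul_le_from:
  fixes \<mu> K M :: real
  assumes "\<mu> \<ge> 0" "K \<ge> 0" "M > 0" "\<mu> \<le> M / (K+1)"
  shows "\<mu> * K \<le> M"
proof -
  have "\<mu> * K \<le> M / (K+1) * K" using assms by (intro mult_right_mono) auto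
  also have "\<dots> = M * (K / (K+1))" by simp
  also have "\<dots> \<le> M * 1" using assms by (intro mult_left_mono) auto
  finally show ?thesis by simp
qed

lemma box_lyap:
  fixes l1 l2 eps dl bt R us :: real
  assumes l1: "l1 > 0" and l2: "l2 > 0" and eps: "eps > 0" and dl: "dl > 0" and bt: "bt \<ge> 0" and R: "R > 0"
  obtains \<mu> a b c where "a > 0" "b > 0" "c > 0"
    "\<And>\<eta>. \<bar>fst \<eta>\<bar> \<le> R \<Longrightarrow> \<bar>snd \<eta>\<bar> \<le> R \<Longrightarrow> a * ((fst \<eta>)\<^sup>2 + (snd \<eta>)\<^sup>2) \<le> Vf l1 l2 eps \<mu> \<eta>"
    "\<And>\<eta>. \<bar>fst \<eta>\<bar> \<le> R \<Longrightarrow> \<bar>snd \<eta>\<bar> \<le> R \<Longrightarrow> Vf l1 l2 eps \<mu> \<eta> \<le> b * ((fst \<eta>)\<^sup>2 + (snd \<eta>)\<^sup>2)"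
    "\<And>\<eta>. \<bar>fst \<eta>\<bar> \<le> R \<Longrightarrow> \<bar>snd \<eta>\<bar> \<le> R \<Longrightarrow>
        Vdot l1 l2 eps \<mu> \<eta> (closed_loop l1 l2 us dl eps bt \<eta>) \<le> - c * ((fst \<eta>)\<^sup>2 + (snd \<eta>)\<^sup>2)"
proof -
  define E where "E = exp R"
  define e where "e = exp (-R)"
  have Ep: "E > 0" and ep: "e > 0" unfolding E_def e_def by auto
  define QM where "QM = l2 * E"
  define Qm where "Qm = l2 * e"
  define PM where "PM = E / l1"
  define C where "C = PM + (1+eps) * QM"
  have QMp: "QM > 0" and Qmp: "Qm > 0" and PMp: "PM > 0" unfolding QM_def Qm_def PM_def using Ep ep l1 l2 by auto
  have Cp: "C > 0" unfolding C_def using PMp QMp eps by (simp add: add_pos_pos)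
  define K1 where "K1 = QM"
  define K2 where "K2 = (1+eps) * PM"
  define K3 where "K3 = eps\<^sup>2 * QM / 2"
  define K4 where "K4 = (1::real)"
  define K5 where "K5 = bt * C\<^sup>2 / dl"
  define K6 where "K6 = (E / l1)\<^sup>2"
  define K7 where "K7 = (l2 * E)\<^sup>2"
  define M1 where "M1 = (1::real)/2"
  define M2 where "M2 = eps * (1+eps) / 6"
  define M7 where "M7 = (1+eps) * l2 * e / 2"
  define M6 where "M6 = e / (2 * l1)"
  have Kn: "K1 \<ge> 0" "K2 \<ge> 0" "K3 \<ge> 0" "K4 \<ge> 0" "K5 \<ge> 0" "K6 \<ge> 0" "K7 \<ge> 0"
    unfolding K1_def K2_def K3_def K4_def K5_def K6_def K7_def using QMp PMp eps bt dl by auto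
  have Mp: "M1 > 0" "M2 > 0" "M6 > 0" "M7 > 0" unfolding M1_def M2_def M6_def M7_def using eps l1 l2 ep by auto
  define \<mu> where "\<mu> = min (M1/(K1+1)) (min (M2/(K2+1)) (min (M2/(K3+1)) (min (1/(K4+1))
                    (min (M2/(K5+1)) (min (M6/(K6+1)) (M7/(K7+1)))))))"
  have mup: "\<mu> > 0" unfolding \<mu>_def using Kn Mp by (simp add: add_nonneg_pos)
  have mu0: "\<mu> \<ge> 0" using mup by simp
  have u1: "\<mu> \<le> M1/(K1+1)" unfolding \<mu>_def by (rule min.cobounded1)
  have u2: "\<mu> \<le> M2/(K2+1)" unfolding \<mu>_def by (rule min.coboundedI2, rule min.cobounded1)
  have u3: "\<mu> \<le> M2/(K3+1)" unfolding \<mu>_def by (rule min.coboundedI2, rule min.coboundedI2, rule min.cobounded1)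
  have u4: "\<mu> \<le> 1/(K4+1)" unfolding \<mu>_def
    by (rule min.coboundedI2, rule min.coboundedI2, rule min.coboundedI2, rule min.cobounded1)
  have u5: "\<mu> \<le> M2/(K5+1)" unfolding \<mu>_def
    by (rule min.coboundedI2, rule min.coboundedI2, rule min.coboundedI2, rule min.coboundedI2, rule min.cobounded1)
  have u6: "\<mu> \<le> M6/(K6+1)" unfolding \<mu>_def
    by (rule min.coboundedI2, rule min.coboundedI2, rule min.coboundedI2, rule min.coboundedI2,
        rule min.coboundedI2, rule min.cobounded1)
  have u7: "\<mu> \<le> M7/(K7+1)" unfolding \<mu>_def
    by (rule min.coboundedI2, rule min.coboundedI2, rule min.coboundedI2, rule min.coboundedI2,
        rule min.coboundedI2, rule min.cobounded2)
  have c1: "\<mu> * QM \<le> 1/2" using mul_le_from[OF mu0 Kn(1) Mp(1) u1] unfolding K1_def M1_def .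
  have c2: "\<mu> * (1+eps) * PM \<le> eps*(1+eps)/6" using mul_le_from[OF mu0 Kn(2) Mp(2) u2] unfolding K2_def M2_def
    by (simp add: mult.assoc)
  have c3: "\<mu> * eps\<^sup>2 * QM / 2 \<le> eps*(1+eps)/6" using mul_le_from[OF mu0 Kn(3) Mp(2) u3] unfolding K3_def M2_def
    by (simp add: mult.assoc)
  have c4: "\<mu> \<le> 1" using mul_le_from[OF mu0 Kn(4) _ u4] unfolding K4_def by simp
  have c5: "bt * \<mu> * C\<^sup>2 / dl \<le> eps*(1+eps)/6" using mul_le_from[OF mu0 Kn(5) Mp(2) u5] unfolding K5_def M2_def
    by (simp add: mult.assoc mult.left_commute)
  have c6: "\<mu> * (E / l1)\<^sup>2 \<le> e / (2 * l1)" using mul_le_from[OF mu0 Kn(6) Mp(3) u6] unfolding K6_def M6_def .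
  have c7: "\<mu> * (l2 * E)\<^sup>2 \<le> (1+eps) * l2 * e / 2" using mul_le_from[OF mu0 Kn(7) Mp(4) u7] unfolding K7_def M7_def .
  define a where "a = min (e / (4*l1)) ((1+eps)*l2*e/4)"
  define b1 where "b1 = E / (2*l1) + \<mu> * (E / l1)\<^sup>2 / 2"
  define b2 where "b2 = (1+eps)*l2*E/2 + \<mu> * (l2 * E)\<^sup>2 / 2"
  define c where "c = min (\<mu> * Qm / 2 * (e / l1)\<^sup>2) (eps * (1+eps) / 2 * (l2 * e)\<^sup>2)"
  have ap: "a > 0" unfolding a_def using ep l1 l2 eps by auto
  have b1p: "b1 > 0" unfolding b1_def using Ep l1 mup by (simp add: add_pos_nonneg)
  have b2p: "b2 > 0" unfolding b2_def using Ep l2 mup eps by (simp add: add_pos_nonneg)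
  have cp: "c > 0" unfolding c_def using mup Qmp ep l1 l2 eps by auto
  show ?thesis
  proof (rule that[of a "b1 + b2" c \<mu>])
    show "a > 0" "b1 + b2 > 0" "c > 0" using ap b1p b2p cp by auto
  next
    fix \<eta> :: "real \<times> real" assume h: "\<bar>fst \<eta>\<bar> \<le> R" "\<bar>snd \<eta>\<bar> \<le> R"
    note pq = pq_bounds[OF l1 l2 h, folded E_def e_def]
    note Wb = W_bounds[OF l1 l2 eps h, folded E_def e_def]
    define p where "p = phi1 l1 (fst \<eta>)"
    define q where "q = phi2 l2 (snd \<eta>)"
    have V: "Vf l1 l2 eps \<mu> \<eta> = Wf l1 l2 eps \<eta> - \<mu> * (p * q)" unfolding Vf_def p_def q_def by simp
    have pq2: "\<bar>p * q\<bar> \<le> (p\<^sup>2 + q\<^sup>2) / 2"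
    proof -
      have "0 \<le> (\<bar>p\<bar> - \<bar>q\<bar>)\<^sup>2" by simp
      hence "2 * (\<bar>p\<bar> * \<bar>q\<bar>) \<le> p\<^sup>2 + q\<^sup>2" by (simp add: power2_eq_square algebra_simps)
      thus ?thesis by (simp add: abs_mult)
    qed
    have mpq: "\<bar>\<mu> * (p * q)\<bar> \<le> \<mu> * (E / l1)\<^sup>2 / 2 * (fst \<eta>)\<^sup>2 + \<mu> * (l2 * E)\<^sup>2 / 2 * (snd \<eta>)\<^sup>2"
    proof -
      have "\<bar>\<mu> * (p * q)\<bar> = \<mu> * \<bar>p * q\<bar>" using mup by (simp add: abs_mult)
      also have "\<dots> \<le> \<mu> * ((p\<^sup>2 + q\<^sup>2) / 2)" using pq2 mup by (intro mult_left_mono) auto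
      also have "\<dots> \<le> \<mu> * (((E / l1)\<^sup>2 * (fst \<eta>)\<^sup>2 + (l2 * E)\<^sup>2 * (snd \<eta>)\<^sup>2) / 2)"
        using pq(2,4) mup unfolding p_def q_def by (intro mult_left_mono divide_right_mono add_mono) auto
      finally show ?thesis by (simp add: algebra_simps)
    qed
    have m6: "\<mu> * (E / l1)\<^sup>2 / 2 * (fst \<eta>)\<^sup>2 \<le> e / (4*l1) * (fst \<eta>)\<^sup>2"
      using c6 by (intro mult_right_mono) auto
    have m7: "\<mu> * (l2 * E)\<^sup>2 / 2 * (snd \<eta>)\<^sup>2 \<le> (1+eps)*l2*e/4 * (snd \<eta>)\<^sup>2"
      using c7 by (intro mult_right_mono) auto
    have a1: "a * (fst \<eta>)\<^sup>2 \<le> e / (4*l1) * (fst \<eta>)\<^sup>2" unfolding a_def by (intro mult_right_mono) auto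
    have a2: "a * (snd \<eta>)\<^sup>2 \<le> (1+eps)*l2*e/4 * (snd \<eta>)\<^sup>2" unfolding a_def by (intro mult_right_mono) auto
    have e4: "e / (2*l1) * (fst \<eta>)\<^sup>2 = 2 * (e / (4*l1) * (fst \<eta>)\<^sup>2)" "(1+eps)*l2*e/2 * (snd \<eta>)\<^sup>2 = 2 * ((1+eps)*l2*e/4 * (snd \<eta>)\<^sup>2)"
      by (simp_all add: field_simps)
    show "a * ((fst \<eta>)\<^sup>2 + (snd \<eta>)\<^sup>2) \<le> Vf l1 l2 eps \<mu> \<eta>"
    proof -
      have "\<mu> * (p * q) \<le> \<bar>\<mu> * (p * q)\<bar>" by (rule abs_ge_self)
      moreover have "a * ((fst \<eta>)\<^sup>2 + (snd \<eta>)\<^sup>2) = a * (fst \<eta>)\<^sup>2 + a * (snd \<eta>)\<^sup>2" by (simp add: algebra_simps)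
      ultimately show ?thesis unfolding V using Wb(1) mpq m6 m7 a1 a2 e4 by linarith
    qed
    have b1s: "b1 * (fst \<eta>)\<^sup>2 \<le> (b1 + b2) * (fst \<eta>)\<^sup>2" using b2p by (intro mult_right_mono) auto
    have b2s: "b2 * (snd \<eta>)\<^sup>2 \<le> (b1 + b2) * (snd \<eta>)\<^sup>2" using b1p by (intro mult_right_mono) auto
    show "Vf l1 l2 eps \<mu> \<eta> \<le> (b1 + b2) * ((fst \<eta>)\<^sup>2 + (snd \<eta>)\<^sup>2)"
    proof -
      have "- (\<mu> * (p * q)) \<le> \<bar>\<mu> * (p * q)\<bar>" by (rule abs_ge_minus_self)
      moreover have "(b1 + b2) * ((fst \<eta>)\<^sup>2 + (snd \<eta>)\<^sup>2) = (b1 + b2) * (fst \<eta>)\<^sup>2 + (b1 + b2) * (snd \<eta>)\<^sup>2"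
        by (simp add: algebra_simps)
      moreover have "b1 * (fst \<eta>)\<^sup>2 = exp R / (2*l1) * (fst \<eta>)\<^sup>2 + \<mu> * (E / l1)\<^sup>2 / 2 * (fst \<eta>)\<^sup>2"
        "b2 * (snd \<eta>)\<^sup>2 = (1+eps)*l2*exp R/2 * (snd \<eta>)\<^sup>2 + \<mu> * (l2 * E)\<^sup>2 / 2 * (snd \<eta>)\<^sup>2"
        unfolding b1_def b2_def E_def by (simp_all add: algebra_simps)
      ultimately show ?thesis unfolding V using W_bounds(2)[OF l1 l2 eps h] mpq b1s b2s by linarith
    qed
    define s where "s = sat dl (varphi l1 l2 eps \<eta>)"
    define \<phi> where "\<phi> = varphi l1 l2 eps \<eta>"
    define P where "P = exp (- fst \<eta>) / l1"
    define Q where "Q = l2 * exp (snd \<eta>)"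
    have phi: "\<phi> = p + (1+eps) * q" unfolding \<phi>_def varphi_def p_def q_def ..
    have s1: "s * \<phi> \<ge> 0" unfolding s_def \<phi>_def by (rule sat_nonneg_mult[OF dl])
    have s2: "dl * s\<^sup>2 \<le> s * \<phi>" unfolding s_def \<phi>_def by (rule sat_sqr[OF dl])
    have Q1: "Qm \<le> Q" unfolding Qm_def Q_def e_def using h l2 by simp
    have Q2: "Q \<le> QM" unfolding QM_def Q_def E_def using h l2 by simp
    have P1: "0 \<le> P" unfolding P_def using l1 by simp
    have P2: "P \<le> PM" unfolding PM_def P_def E_def using h l1 by (simp add: divide_right_mono)
    have KI: "p * (-(1+eps)*q - bt * s) + (1+eps) * q * (p - eps*q - bt * s)
         - \<mu> * (P * (-(1+eps)*q - bt * s) * q + p * Q * (p - eps*q - bt * s))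
      \<le> -(\<mu> * Qm / 2) * p\<^sup>2 - eps * (1+eps) / 2 * q\<^sup>2"
      by (rule key_ineq[OF phi s1 s2 Q1 Q2 P1 P2 Qmp mup c1 c2 c3 c4 c5 C_def bt eps dl])
    have VD: "Vdot l1 l2 eps \<mu> \<eta> (closed_loop l1 l2 us dl eps bt \<eta>) =
         p * (-(1+eps)*q - bt * s) + (1+eps) * q * (p - eps*q - bt * s)
         - \<mu> * (P * (-(1+eps)*q - bt * s) * q + p * Q * (p - eps*q - bt * s))"
      unfolding Vdot_def closed_loop_eq p_def q_def s_def P_def Q_def by simp
    have r1: "(\<mu> * Qm / 2) * ((e / l1)\<^sup>2 * (fst \<eta>)\<^sup>2) \<le> (\<mu> * Qm / 2) * p\<^sup>2"
      using pq(1) mup Qmp unfolding p_def by (intro mult_left_mono) auto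
    have r2: "eps * (1+eps) / 2 * ((l2 * e)\<^sup>2 * (snd \<eta>)\<^sup>2) \<le> eps * (1+eps) / 2 * q\<^sup>2"
      using pq(3) eps unfolding q_def by (intro mult_left_mono) auto
    have r3: "c * (fst \<eta>)\<^sup>2 \<le> (\<mu> * Qm / 2 * (e / l1)\<^sup>2) * (fst \<eta>)\<^sup>2" unfolding c_def by (intro mult_right_mono) auto
    have r4: "c * (snd \<eta>)\<^sup>2 \<le> (eps * (1+eps) / 2 * (l2 * e)\<^sup>2) * (snd \<eta>)\<^sup>2" unfolding c_def by (intro mult_right_mono) auto
    show "Vdot l1 l2 eps \<mu> \<eta> (closed_loop l1 l2 us dl eps bt \<eta>) \<le> - c * ((fst \<eta>)\<^sup>2 + (snd \<eta>)\<^sup>2)"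
    proof -
      have "c * ((fst \<eta>)\<^sup>2 + (snd \<eta>)\<^sup>2) = c * (fst \<eta>)\<^sup>2 + c * (snd \<eta>)\<^sup>2" by (simp add: algebra_simps)
      moreover have "(\<mu> * Qm / 2 * (e / l1)\<^sup>2) * (fst \<eta>)\<^sup>2 = (\<mu> * Qm / 2) * ((e / l1)\<^sup>2 * (fst \<eta>)\<^sup>2)"
        "(eps * (1+eps) / 2 * (l2 * e)\<^sup>2) * (snd \<eta>)\<^sup>2 = eps * (1+eps) / 2 * ((l2 * e)\<^sup>2 * (snd \<eta>)\<^sup>2)"
        by simp_all
      moreover have "-(\<mu> * Qm / 2) * p\<^sup>2 - eps * (1+eps) / 2 * q\<^sup>2 = - ((\<mu> * Qm / 2) * p\<^sup>2) - eps * (1+eps) / 2 * q\<^sup>2"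
        by simp
      ultimately show ?thesis unfolding VD using KI r1 r2 r3 r4 by linarith
    qed
  qed
qed


lemma norm_sq: "(norm (\<eta> :: real \<times> real))\<^sup>2 = (fst \<eta>)\<^sup>2 + (snd \<eta>)\<^sup>2"
  by (cases \<eta>) (simp add: norm_Pair)

lemma sol_cont:
  assumes "is_solution f x"
  shows "continuous_on {0..} x"
  unfolding continuous_on_eq_continuous_within
  using assms unfolding is_solution_def by (auto intro: has_vector_derivative_continuous)

lemma sol_deriv_at:
  assumes "is_solution f x" "t > 0"
  shows "(x has_vector_derivative f (x t)) (at t)"
proof -
  have "t \<in> interior {0..}" using assms(2) by simp
  hence "at t within {0..} = at t" by (rule at_within_interior)
  thus ?thesis using assms unfolding is_solution_def by (metis less_eq_real_def)
qed

lemma nonincr_from_deriv: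
  fixes h :: "real \<Rightarrow> real"
  assumes "\<And>s. s \<ge> 0 \<Longrightarrow> \<exists>D. (h has_real_derivative D) (at s within {0..})"
    and "\<And>s. s > 0 \<Longrightarrow> s < t \<Longrightarrow> \<exists>D. (h has_real_derivative D) (at s) \<and> D \<le> 0"
    and "t \<ge> 0"
  shows "h t \<le> h 0"
proof -
  have "continuous_on {0..} h"
    unfolding continuous_on_eq_continuous_within
  proof
    fix s :: real assume "s \<in> {0..}"
    then obtain D where "(h has_real_derivative D) (at s within {0..})" using assms(1) by auto
    thus "continuous (at s within {0..}) h" by (rule DERIV_continuous)
  qed
  hence "continuous_on {0..t} h" by (rule continuous_on_subset) auto
  thus ?thesis using DERIV_nonpos_imp_decreasing_open[OF assms(3)] assms(2) by blast
qed

lemma W_nonincr: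
  assumes "l1 > 0" "l2 > 0" "eps > 0" "dl > 0" "bt \<ge> 0"
    and sol: "is_solution (closed_loop l1 l2 us dl eps bt) x" and t: "t \<ge> 0"
  shows "Wf l1 l2 eps (x t) \<le> Wf l1 l2 eps (x 0)"
proof (rule nonincr_from_deriv[OF _ _ t])
  fix s :: real assume "s \<ge> 0"
  hence "(x has_vector_derivative closed_loop l1 l2 us dl eps bt (x s)) (at s within {0..})"
    using sol unfolding is_solution_def by blast
  thus "\<exists>D. ((\<lambda>t. Wf l1 l2 eps (x t)) has_real_derivative D) (at s within {0..})"
    using W_deriv[OF _ assms(1)] by blast
next
  fix s :: real assume s: "s > 0" "s < t"
  show "\<exists>D. ((\<lambda>t. Wf l1 l2 eps (x t)) has_real_derivative D) (at s) \<and> D \<le> 0"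
    using W_deriv[OF sol_deriv_at[OF sol s(1)] assms(1)] W_dot_nonpos[OF assms(1-5)] by blast
qed

lemma exp_decay:
  fixes l1 l2 eps dl bt R us :: real
  assumes l1: "l1 > 0" and l2: "l2 > 0" and eps: "eps > 0" and dl: "dl > 0" and bt: "bt \<ge> 0" and R: "R > 0"
  obtains M k where "M > 0" "k > 0"
    "\<And>x t. is_solution (closed_loop l1 l2 us dl eps bt) x \<Longrightarrow>
       (\<And>t. t \<ge> 0 \<Longrightarrow> \<bar>fst (x t)\<bar> \<le> R \<and> \<bar>snd (x t)\<bar> \<le> R) \<Longrightarrow> t \<ge> 0 \<Longrightarrow>
       norm (x t) \<le> M * exp (- k * t) * norm (x 0)"
proof -
  obtain a b c \<mu> where abc: "a > 0" "b > 0" "c > 0"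
    and lo: "\<And>\<eta>. \<bar>fst \<eta>\<bar> \<le> R \<Longrightarrow> \<bar>snd \<eta>\<bar> \<le> R \<Longrightarrow> a * ((fst \<eta>)\<^sup>2 + (snd \<eta>)\<^sup>2) \<le> Vf l1 l2 eps \<mu> \<eta>"
    and up: "\<And>\<eta>. \<bar>fst \<eta>\<bar> \<le> R \<Longrightarrow> \<bar>snd \<eta>\<bar> \<le> R \<Longrightarrow> Vf l1 l2 eps \<mu> \<eta> \<le> b * ((fst \<eta>)\<^sup>2 + (snd \<eta>)\<^sup>2)"
    and dt: "\<And>\<eta>. \<bar>fst \<eta>\<bar> \<le> R \<Longrightarrow> \<bar>snd \<eta>\<bar> \<le> R \<Longrightarrow>
        Vdot l1 l2 eps \<mu> \<eta> (closed_loop l1 l2 us dl eps bt \<eta>) \<le> - c * ((fst \<eta>)\<^sup>2 + (snd \<eta>)\<^sup>2)"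
    by (rule box_lyap[OF l1 l2 eps dl bt R, where us=us]) blast
  define \<kappa> where "\<kappa> = c / b"
  have kp: "\<kappa> > 0" unfolding \<kappa>_def using abc by simp
  show ?thesis
  proof (rule that[of "sqrt (b / a)" "\<kappa> / 2"])
    show "sqrt (b / a) > 0" "\<kappa> / 2 > 0" using abc kp by auto
  next
    fix x :: "real \<Rightarrow> real \<times> real" and t :: real
    assume sol: "is_solution (closed_loop l1 l2 us dl eps bt) x"
      and box: "\<And>t. t \<ge> 0 \<Longrightarrow> \<bar>fst (x t)\<bar> \<le> R \<and> \<bar>snd (x t)\<bar> \<le> R" and t: "t \<ge> 0"
    let ?f = "closed_loop l1 l2 us dl eps bt"
    define h where "h s = Vf l1 l2 eps \<mu> (x s) * exp (\<kappa> * s)" for s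
    have hd: "(h has_real_derivative (Vdot l1 l2 eps \<mu> (x s) (?f (x s)) * exp (\<kappa> * s)
              + Vf l1 l2 eps \<mu> (x s) * (exp (\<kappa> * s) * \<kappa>))) (at s within S)"
      if "(x has_vector_derivative ?f (x s)) (at s within S)" for s S
      unfolding h_def
      by (auto intro!: derivative_eq_intros V_deriv'[OF that l1])
    have "h t \<le> h 0"
    proof (rule nonincr_from_deriv[OF _ _ t])
      fix s :: real assume "s \<ge> 0"
      hence "(x has_vector_derivative ?f (x s)) (at s within {0..})"
        using sol unfolding is_solution_def by blast
      thus "\<exists>D. (h has_real_derivative D) (at s within {0..})"
        using hd by blast
    next
      fix s :: real assume s: "s > 0" "s < t"
      have bs: "\<bar>fst (x s)\<bar> \<le> R" "\<bar>snd (x s)\<bar> \<le> R" using box[of s] s by auto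
      define n where "n = (fst (x s))\<^sup>2 + (snd (x s))\<^sup>2"
      have "Vdot l1 l2 eps \<mu> (x s) (?f (x s)) + \<kappa> * Vf l1 l2 eps \<mu> (x s) \<le> - c * n + \<kappa> * (b * n)"
        using dt[OF bs] mult_left_mono[OF up[OF bs] less_imp_le[OF kp]] unfolding n_def by linarith
      also have "\<dots> = 0" unfolding \<kappa>_def using abc by simp
      finally have le: "Vdot l1 l2 eps \<mu> (x s) (?f (x s)) + \<kappa> * Vf l1 l2 eps \<mu> (x s) \<le> 0" .
      have "Vdot l1 l2 eps \<mu> (x s) (?f (x s)) * exp (\<kappa> * s) + Vf l1 l2 eps \<mu> (x s) * (exp (\<kappa> * s) * \<kappa>)
           = (Vdot l1 l2 eps \<mu> (x s) (?f (x s)) + \<kappa> * Vf l1 l2 eps \<mu> (x s)) * exp (\<kappa> * s)"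
        by (simp add: algebra_simps)
      also have "\<dots> \<le> 0" using le by (simp add: mult_nonpos_nonneg)
      finally show "\<exists>D. (h has_real_derivative D) (at s) \<and> D \<le> 0"
        using hd[OF sol_deriv_at[OF sol s(1)]] by blast
    qed
    hence V1: "Vf l1 l2 eps \<mu> (x t) * exp (\<kappa> * t) \<le> Vf l1 l2 eps \<mu> (x 0)" unfolding h_def by simp
    have bt0: "\<bar>fst (x t)\<bar> \<le> R" "\<bar>snd (x t)\<bar> \<le> R" using box[OF t] by auto
    have b00: "\<bar>fst (x 0)\<bar> \<le> R" "\<bar>snd (x 0)\<bar> \<le> R" using box[of 0] by auto
    have "a * (norm (x t))\<^sup>2 * exp (\<kappa> * t) \<le> Vf l1 l2 eps \<mu> (x t) * exp (\<kappa> * t)"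
      using lo[OF bt0] unfolding norm_sq by (intro mult_right_mono) auto
    also have "\<dots> \<le> b * (norm (x 0))\<^sup>2" using V1 up[OF b00] unfolding norm_sq by linarith
    finally have A: "a * (norm (x t))\<^sup>2 * exp (\<kappa> * t) \<le> b * (norm (x 0))\<^sup>2" .
    have ek: "exp (\<kappa> * t) = (exp (\<kappa> / 2 * t))\<^sup>2"
      by (simp add: power2_eq_square flip: exp_add)
    have "(norm (x t))\<^sup>2 \<le> (sqrt (b / a) * exp (- (\<kappa> / 2) * t) * norm (x 0))\<^sup>2"
    proof -
      have "(norm (x t))\<^sup>2 = (a * (norm (x t))\<^sup>2 * exp (\<kappa> * t)) / (a * exp (\<kappa> * t))"
        using abc by simp
      also have "\<dots> \<le> (b * (norm (x 0))\<^sup>2) / (a * exp (\<kappa> * t))"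
        using A abc by (intro divide_right_mono) auto
      also have "\<dots> = (sqrt (b / a) * exp (- (\<kappa> / 2) * t) * norm (x 0))\<^sup>2"
        using abc unfolding ek by (simp add: power_mult_distrib exp_minus field_simps)
      finally show ?thesis .
    qed
    thus "norm (x t) \<le> sqrt (b / a) * exp (- (\<kappa> / 2) * t) * norm (x 0)"
      by (rule power2_le_imp_le) (use abc in simp)
  qed
qed


lemma lip_cont:
  fixes g :: "real \<times> real \<Rightarrow> real \<times> real"
  assumes "\<And>a b. norm (g a - g b) \<le> L * norm (a - b)" "L \<ge> 0"
  shows "continuous_on S g"
  by (rule lipschitz_on_continuous_on[of L]) (rule lipschitz_onI, use assms in \<open>auto simp: dist_norm\<close>)

lemma int_cont_upper:
  fixes h :: "real \<Rightarrow> real \<times> real"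
  assumes "continuous_on UNIV h"
  shows "continuous_on UNIV (\<lambda>t. integral {0..max 0 t} h)"
proof (rule continuous_at_imp_continuous_on, intro ballI)
  fix t :: real
  define b where "b = \<bar>t\<bar> + 1"
  have "continuous_on {0..b} (\<lambda>u. integral {0..u} h)"
    by (rule indefinite_integral_continuous_1, rule integrable_continuous_interval)
       (rule continuous_on_subset[OF assms], auto)
  hence "continuous_on {-b..b} (\<lambda>t. integral {0..max 0 t} h)"
    by (rule continuous_on_compose2[where f="\<lambda>t. max 0 t"]) (auto intro!: continuous_intros simp: b_def)
  moreover have "t \<in> interior {-b..b}" unfolding b_def by auto
  ultimately show "isCont (\<lambda>t. integral {0..max 0 t} h) t" by (rule continuous_on_interior)
qed

lemma exp_integral:
  fixes K C t :: real
  assumes "K > 0" "t \<ge> 0"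
  shows "((\<lambda>s. C * exp (K * s)) has_integral (C * (exp (K * t) - 1) / K)) {0..t}"
proof -
  have "((\<lambda>s. C * exp (K * s)) has_integral ((\<lambda>s. C * exp (K * s) / K) t - (\<lambda>s. C * exp (K * s) / K) 0)) {0..t}"
  proof (rule fundamental_theorem_of_calculus[OF assms(2)])
    fix s assume "s \<in> {0..t}"
    show "((\<lambda>s. C * exp (K * s) / K) has_vector_derivative C * exp (K * s)) (at s within {0..t})"
      unfolding has_real_derivative_iff_has_vector_derivative[symmetric]
      using assms by (auto intro!: derivative_eq_intros)
  qed
  thus ?thesis by (simp add: diff_divide_distrib right_diff_distrib)
qed

lemma global_exist:
  fixes g :: "real \<times> real \<Rightarrow> real \<times> real" and z :: "real \<times> real"
  assumes lip: "\<And>a b. norm (g a - g b) \<le> L * norm (a - b)" and L: "L > 0"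
    and bnd: "\<And>a. norm (g a) \<le> G"
  shows "\<exists>X. X 0 = z \<and> (\<forall>t\<ge>0. (X has_vector_derivative g (X t)) (at t within {0..}))"
proof -
  define K where "K = 2 * L"
  have K: "K > 0" unfolding K_def using L by simp
  have gc: "continuous_on S g" for S by (rule lip_cont[OF lip]) (use L in simp)
  have G0: "G \<ge> 0" using bnd[of 0] norm_ge_zero[of "g 0"] by linarith
  define hw where "hw w s = g (exp (K * s) *\<^sub>R apply_bcontfun w s)" for w :: "real \<Rightarrow>\<^sub>C (real \<times> real)" and s
  have hwc: "continuous_on S (hw w)" for w S
    unfolding hw_def by (rule continuous_on_compose2[OF gc[of UNIV]]) (auto intro!: continuous_intros)
  define \<Phi> where "\<Phi> w t = exp (- K * max 0 t) *\<^sub>R (z + integral {0..max 0 t} (hw w))" for w t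
  have ib: "norm (integral {0..u} (hw w)) \<le> G * u" if "u \<ge> 0" for w u
    using integral_bound[OF that hwc, where B=G] bnd unfolding hw_def by simp
  have inbc: "\<Phi> w \<in> bcontfun" for w
  proof (rule bcontfun_normI)
    show "continuous_on UNIV (\<Phi> w)" unfolding \<Phi>_def
      by (intro continuous_intros int_cont_upper hwc)
  next
    fix t :: real
    define u where "u = max 0 t"
    have u: "u \<ge> 0" unfolding u_def by simp
    have eu: "exp (- K * u) \<le> 1" using K u by simp
    have ue: "u * exp (- K * u) \<le> 1 / K"
    proof -
      have "exp (K * u) \<ge> 1 + K * u" using exp_ge_add_one_self by blast
      hence "K * u \<le> exp (K * u)" by linarith
      hence "K * u * exp (- K * u) \<le> exp (K * u) * exp (- K * u)" by (intro mult_right_mono) auto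
      also have "\<dots> = 1" by (simp flip: exp_add)
      finally show ?thesis using K by (simp add: field_simps)
    qed
    have "norm (\<Phi> w t) = exp (- K * u) * norm (z + integral {0..u} (hw w))"
      unfolding \<Phi>_def u_def by simp
    also have "\<dots> \<le> exp (- K * u) * (norm z + G * u)"
      using norm_triangle_ineq[of z "integral {0..u} (hw w)"] ib[OF u, of w]
      by (intro mult_left_mono) auto
    also have "\<dots> = exp (- K * u) * norm z + G * (u * exp (- K * u))" by (simp add: algebra_simps)
    also have "\<dots> \<le> 1 * norm z + G * (1 / K)"
      using eu ue G0 by (intro add_mono mult_right_mono mult_left_mono) auto
    finally show "norm (\<Phi> w t) \<le> norm z + G / K" by simp
  qed
  define \<Psi> where "\<Psi> w = Bcontfun (\<Phi> w)" for w
  have \<Psi>app: "apply_bcontfun (\<Psi> w) = \<Phi> w" for w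
    unfolding \<Psi>_def by (rule Bcontfun_inverse[OF inbc])
  have contr: "dist (\<Psi> w1) (\<Psi> w2) \<le> (1/2) * dist w1 w2" for w1 w2
  proof (rule dist_bound)
    fix t :: real
    define u where "u = max 0 t"
    have u: "u \<ge> 0" unfolding u_def by simp
    define D where "D = dist w1 w2"
    have i1: "hw w1 integrable_on {0..u}" "hw w2 integrable_on {0..u}"
      by (rule integrable_continuous_interval[OF hwc])+
    have pt: "norm (hw w1 s - hw w2 s) \<le> L * D * exp (K * s)" for s
    proof -
      have "norm (hw w1 s - hw w2 s) \<le> L * norm (exp (K * s) *\<^sub>R apply_bcontfun w1 s - exp (K * s) *\<^sub>R apply_bcontfun w2 s)"
        unfolding hw_def by (rule lip)
      also have "\<dots> = L * (exp (K * s) * dist (apply_bcontfun w1 s) (apply_bcontfun w2 s))"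
        by (simp add: dist_norm flip: scaleR_diff_right)
      also have "\<dots> \<le> L * (exp (K * s) * D)" unfolding D_def using L
        by (intro mult_left_mono dist_bounded) auto
      finally show ?thesis by (simp add: algebra_simps)
    qed
    have "norm (integral {0..u} (\<lambda>s. hw w1 s - hw w2 s)) \<le> integral {0..u} (\<lambda>s. L * D * exp (K * s))"
      by (rule integral_norm_bound_integral[OF integrable_diff[OF i1]])
         (auto intro!: pt integrable_continuous_interval continuous_intros)
    also have "\<dots> = L * D * (exp (K * u) - 1) / K"
      by (rule integral_unique[OF exp_integral[OF K u]])
    finally have I: "norm (integral {0..u} (hw w1) - integral {0..u} (hw w2)) \<le> L * D * (exp (K * u) - 1) / K"
      using integral_diff[OF i1] by simp
    have "dist (apply_bcontfun (\<Psi> w1) t) (apply_bcontfun (\<Psi> w2) t)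
          = exp (- K * u) * norm (integral {0..u} (hw w1) - integral {0..u} (hw w2))"
      unfolding \<Psi>app \<Phi>_def u_def[symmetric] dist_norm
      by (simp flip: scaleR_diff_right)
    also have "\<dots> \<le> exp (- K * u) * (L * D * (exp (K * u) - 1) / K)"
      using I by (intro mult_left_mono) auto
    also have "\<dots> = L * D / K * (1 - exp (- K * u))"
      using K by (simp add: field_simps exp_minus)
    also have "\<dots> \<le> L * D / K * 1"
      using K L u by (intro mult_left_mono) (auto simp: D_def)
    also have "\<dots> = (1/2) * D" unfolding K_def using L by simp
    finally show "dist (apply_bcontfun (\<Psi> w1) t) (apply_bcontfun (\<Psi> w2) t) \<le> (1/2) * dist w1 w2"
      unfolding D_def .
  qed
  obtain w where w: "\<Psi> w = w"
    using banach_fix_type[of "1/2" \<Psi>] contr by auto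
  define X where "X t = exp (K * t) *\<^sub>R apply_bcontfun w t" for t
  have hwX: "hw w = (\<lambda>s. g (X s))" unfolding hw_def X_def ..
  have Xeq: "X t = z + integral {0..t} (\<lambda>s. g (X s))" if "t \<ge> 0" for t
  proof -
    have "apply_bcontfun w t = \<Phi> w t" using \<Psi>app[of w] w by simp
    hence "X t = exp (K * t) *\<^sub>R (exp (- K * t) *\<^sub>R (z + integral {0..t} (hw w)))"
      unfolding X_def \<Phi>_def using that by simp
    also have "\<dots> = z + integral {0..t} (hw w)" by (simp flip: exp_add)
    finally show ?thesis unfolding hwX .
  qed
  have gXc: "continuous_on S (\<lambda>s. g (X s))" for S
    unfolding X_def by (rule continuous_on_compose2[OF gc[of UNIV]]) (auto intro!: continuous_intros)
  show ?thesis
  proof (intro exI conjI allI impI)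
    show "X 0 = z" using Xeq[of 0] by simp
  next
    fix t :: real assume t: "t \<ge> 0"
    have d1: "((\<lambda>u. z + integral {0..u} (\<lambda>s. g (X s))) has_vector_derivative g (X t)) (at t within {0..t+1})"
      using integral_has_vector_derivative[OF gXc, of t] t
      by (auto intro!: derivative_eq_intros)
    have "at t within {0..t+1} = at t within {0..}"
      by (rule at_within_nhd[where S="{..<t+1}"]) auto
    hence d2: "((\<lambda>u. z + integral {0..u} (\<lambda>s. g (X s))) has_vector_derivative g (X t)) (at t within {0..})"
      using d1 by simp
    show "(X has_vector_derivative g (X t)) (at t within {0..})"
      by (rule has_vector_derivative_transform_within[OF d2 zero_less_one]) (use t Xeq in auto)
  qed
qed


lemma f_lip:
  fixes l1 l2 eps dl bt R us :: real
  assumes l1: "l1 > 0" and l2: "l2 > 0" and eps: "eps > 0" and dl: "dl > 0" and bt: "bt \<ge> 0"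
  obtains Lf where "Lf > 0" "\<And>a b. \<bar>fst a\<bar> \<le> R \<Longrightarrow> \<bar>snd a\<bar> \<le> R \<Longrightarrow> \<bar>fst b\<bar> \<le> R \<Longrightarrow> \<bar>snd b\<bar> \<le> R \<Longrightarrow>
     norm (closed_loop l1 l2 us dl eps bt a - closed_loop l1 l2 us dl eps bt b) \<le> Lf * norm (a - b)"
proof -
  define E where "E = exp R"
  have Ep: "E > 0" unfolding E_def by simp
  define c1 where "c1 = 1 + 2 * bt / dl"
  define c2 where "c2 = (1 + 2 * eps) + 2 * bt * (1 + eps) / dl"
  have c1p: "c1 > 0" and c2p: "c2 > 0" unfolding c1_def c2_def using bt dl eps by (auto simp: add_pos_nonneg)
  define Lf where "Lf = 2 * (c1 * (E / l1) + c2 * (l2 * E))"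
  have Lfp: "Lf > 0" unfolding Lf_def using c1p c2p Ep l1 l2 by (simp add: add_pos_pos)
  show ?thesis
  proof (rule that[OF Lfp])
    fix a b :: "real \<times> real"
    assume h: "\<bar>fst a\<bar> \<le> R" "\<bar>snd a\<bar> \<le> R" "\<bar>fst b\<bar> \<le> R" "\<bar>snd b\<bar> \<le> R"
    define pa where "pa = phi1 l1 (fst a)"
    define pb where "pb = phi1 l1 (fst b)"
    define qa where "qa = phi2 l2 (snd a)"
    define qb where "qb = phi2 l2 (snd b)"
    define sa where "sa = sat dl (varphi l1 l2 eps a)"
    define sb where "sb = sat dl (varphi l1 l2 eps b)"
    define d1 where "d1 = \<bar>fst a - fst b\<bar>"
    define d2 where "d2 = \<bar>snd a - snd b\<bar>"
    have u1: "\<bar>pa - pb\<bar> \<le> (E / l1) * d1"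
    proof -
      have "\<bar>pa - pb\<bar> = \<bar>exp (- fst b) - exp (- fst a)\<bar> / l1"
        unfolding pa_def pb_def phi1_def using l1 by (simp add: abs_divide right_diff_distrib[symmetric] diff_divide_distrib[symmetric])
      also have "\<dots> \<le> (exp R * \<bar>- fst b - - fst a\<bar>) / l1"
        using exp_lip[of "- fst b" R "- fst a"] h l1 by (intro divide_right_mono) auto
      also have "\<dots> = (E / l1) * d1" unfolding E_def d1_def by (simp add: abs_minus_commute)
      finally show ?thesis .
    qed
    have u2: "\<bar>qa - qb\<bar> \<le> (l2 * E) * d2"
    proof -
      have "\<bar>qa - qb\<bar> = l2 * \<bar>exp (snd a) - exp (snd b)\<bar>"
        unfolding qa_def qb_def phi2_def using l2 by (simp add: abs_mult right_diff_distrib[symmetric])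
      also have "\<dots> \<le> l2 * (exp R * \<bar>snd a - snd b\<bar>)"
        using exp_lip[of "snd a" R "snd b"] h l2 by (intro mult_left_mono) auto
      finally show ?thesis unfolding E_def d2_def by simp
    qed
    have vs: "\<bar>sa - sb\<bar> \<le> (\<bar>pa - pb\<bar> + (1+eps) * \<bar>qa - qb\<bar>) / dl"
    proof -
      have "\<bar>sa - sb\<bar> \<le> \<bar>varphi l1 l2 eps a - varphi l1 l2 eps b\<bar> / dl"
        unfolding sa_def sb_def by (rule sat_lip[OF dl])
      also have "\<bar>varphi l1 l2 eps a - varphi l1 l2 eps b\<bar> = \<bar>(pa - pb) + (1+eps) * (qa - qb)\<bar>"
        unfolding varphi_def pa_def pb_def qa_def qb_def by (simp add: algebra_simps)
      also have "\<dots> \<le> \<bar>pa - pb\<bar> + \<bar>(1+eps) * (qa - qb)\<bar>" by (rule abs_triangle_ineq)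
      also have "\<bar>(1+eps) * (qa - qb)\<bar> = (1+eps) * \<bar>qa - qb\<bar>" using eps by (simp add: abs_mult)
      finally show ?thesis using dl by (simp add: divide_right_mono)
    qed
    have fd: "closed_loop l1 l2 us dl eps bt a - closed_loop l1 l2 us dl eps bt b =
       (-(1+eps) * (qa - qb) - bt * (sa - sb), (pa - pb) - eps * (qa - qb) - bt * (sa - sb))"
      unfolding closed_loop_eq pa_def pb_def qa_def qb_def sa_def sb_def by (simp add: algebra_simps)
    have f1: "\<bar>-(1+eps) * (qa - qb) - bt * (sa - sb)\<bar> \<le> (1+eps) * \<bar>qa - qb\<bar> + bt * \<bar>sa - sb\<bar>"
    proof -
      have "\<bar>-(1+eps) * (qa - qb) - bt * (sa - sb)\<bar> \<le> \<bar>-(1+eps) * (qa - qb)\<bar> + \<bar>bt * (sa - sb)\<bar>"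
        by (rule abs_triangle_ineq4)
      also have "\<bar>-(1+eps) * (qa - qb)\<bar> = (1+eps) * \<bar>qa - qb\<bar>" using eps by (simp add: abs_mult)
      also have "\<bar>bt * (sa - sb)\<bar> = bt * \<bar>sa - sb\<bar>" using bt by (simp add: abs_mult)
      finally show ?thesis .
    qed
    have f2: "\<bar>(pa - pb) - eps * (qa - qb) - bt * (sa - sb)\<bar> \<le> \<bar>pa - pb\<bar> + eps * \<bar>qa - qb\<bar> + bt * \<bar>sa - sb\<bar>"
    proof -
      have "\<bar>(pa - pb) - eps * (qa - qb) - bt * (sa - sb)\<bar> \<le> \<bar>(pa - pb) - eps * (qa - qb)\<bar> + \<bar>bt * (sa - sb)\<bar>"
        by (rule abs_triangle_ineq4)
      also have "\<bar>(pa - pb) - eps * (qa - qb)\<bar> \<le> \<bar>pa - pb\<bar> + \<bar>eps * (qa - qb)\<bar>"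
        by (rule abs_triangle_ineq4)
      also have "\<bar>eps * (qa - qb)\<bar> = eps * \<bar>qa - qb\<bar>" using eps by (simp add: abs_mult)
      also have "\<bar>bt * (sa - sb)\<bar> = bt * \<bar>sa - sb\<bar>" using bt by (simp add: abs_mult)
      finally show ?thesis by simp
    qed
    have bs: "bt * \<bar>sa - sb\<bar> \<le> bt * ((\<bar>pa - pb\<bar> + (1+eps) * \<bar>qa - qb\<bar>) / dl)"
      using vs bt by (intro mult_left_mono) auto
    have tot: "norm (closed_loop l1 l2 us dl eps bt a - closed_loop l1 l2 us dl eps bt b)
       \<le> c1 * \<bar>pa - pb\<bar> + c2 * \<bar>qa - qb\<bar>"
    proof -
      have "norm (closed_loop l1 l2 us dl eps bt a - closed_loop l1 l2 us dl eps bt b)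
          \<le> \<bar>-(1+eps) * (qa - qb) - bt * (sa - sb)\<bar> + \<bar>(pa - pb) - eps * (qa - qb) - bt * (sa - sb)\<bar>"
        unfolding fd using norm_Pair_le[of "-(1+eps) * (qa - qb) - bt * (sa - sb)" "(pa - pb) - eps * (qa - qb) - bt * (sa - sb)"]
        by simp
      also have "\<dots> \<le> c1 * \<bar>pa - pb\<bar> + c2 * \<bar>qa - qb\<bar>"
      proof -
        have e: "c1 * \<bar>pa - pb\<bar> + c2 * \<bar>qa - qb\<bar> = \<bar>pa - pb\<bar> + (1+eps) * \<bar>qa - qb\<bar> + eps * \<bar>qa - qb\<bar>
            + 2 * (bt * ((\<bar>pa - pb\<bar> + (1+eps) * \<bar>qa - qb\<bar>) / dl))"
          unfolding c1_def c2_def using dl by (simp add: field_simps)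
        show ?thesis unfolding e using f1 f2 bs by linarith
      qed
      finally show ?thesis .
    qed
    have "c1 * \<bar>pa - pb\<bar> + c2 * \<bar>qa - qb\<bar> \<le> c1 * ((E / l1) * d1) + c2 * ((l2 * E) * d2)"
      using u1 u2 c1p c2p by (intro add_mono mult_left_mono) auto
    also have "\<dots> \<le> (c1 * (E / l1) + c2 * (l2 * E)) * (d1 + d2)"
      using c1p c2p Ep l1 l2 unfolding d1_def d2_def by (simp add: algebra_simps)
    also have "\<dots> \<le> (c1 * (E / l1) + c2 * (l2 * E)) * (2 * norm (a - b))"
    proof -
      have "norm (fst (a - b)) \<le> norm (a - b)" using norm_fst_le[of "fst (a - b)" "snd (a - b)"] by (simp only: prod.collapse)
      moreover have "norm (snd (a - b)) \<le> norm (a - b)" using norm_snd_le[of "snd (a - b)" "fst (a - b)"] by (simp only: prod.collapse)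
      ultimately have "d1 \<le> norm (a - b)" "d2 \<le> norm (a - b)" unfolding d1_def d2_def by simp_all
      thus ?thesis using c1p c2p Ep l1 l2 by (intro mult_left_mono) auto
    qed
    finally show "norm (closed_loop l1 l2 us dl eps bt a - closed_loop l1 l2 us dl eps bt b) \<le> Lf * norm (a - b)"
      using tot unfolding Lf_def by (simp add: algebra_simps)
  qed
qed


definition cl :: "real \<Rightarrow> real \<Rightarrow> real" where "cl R y = max (-R) (min R y)"
definition clip :: "real \<Rightarrow> real \<times> real \<Rightarrow> real \<times> real" where "clip R \<eta> = (cl R (fst \<eta>), cl R (snd \<eta>))"

lemma cl_bound: "R \<ge> 0 \<Longrightarrow> \<bar>cl R y\<bar> \<le> R" unfolding cl_def by auto
lemma cl_lip: "R \<ge> 0 \<Longrightarrow> \<bar>cl R a - cl R b\<bar> \<le> \<bar>a - b\<bar>" unfolding cl_def by auto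
lemma cl_id: "\<bar>y\<bar> \<le> R \<Longrightarrow> cl R y = y" unfolding cl_def by auto

lemma clip_lip:
  assumes "R \<ge> 0"
  shows "norm (clip R a - clip R b) \<le> norm (a - b)"
proof -
  have "(cl R (fst a) - cl R (fst b))\<^sup>2 \<le> (fst a - fst b)\<^sup>2"
    using cl_lip[OF assms] abs_le_square_iff by blast
  moreover have "(cl R (snd a) - cl R (snd b))\<^sup>2 \<le> (snd a - snd b)\<^sup>2"
    using cl_lip[OF assms] abs_le_square_iff by blast
  ultimately have "(norm (clip R a - clip R b))\<^sup>2 \<le> (norm (a - b))\<^sup>2"
    unfolding norm_sq clip_def by simp
  thus ?thesis by (rule power2_le_imp_le) simp
qed

lemma clip_norm:
  assumes "R \<ge> 0"
  shows "norm (clip R a) \<le> 2 * R"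
proof -
  have "norm (clip R a) \<le> norm (cl R (fst a)) + norm (cl R (snd a))"
    unfolding clip_def by (rule norm_Pair_le)
  thus ?thesis using cl_bound[OF assms, of "fst a"] cl_bound[OF assms, of "snd a"] by simp
qed

lemma f_zero: "closed_loop l1 l2 us dl eps bt (0, 0) = (0, 0)"
  unfolding closed_loop_eq varphi_def phi1_def phi2_def sat_def by simp

lemma exists_sol:
  fixes l1 l2 eps dl bt us :: real
  assumes l1: "l1 > 0" and l2: "l2 > 0" and eps: "eps > 0" and dl: "dl > 0" and bt: "bt \<ge> 0"
  shows "\<exists>x. is_solution (closed_loop l1 l2 us dl eps bt) x \<and> x 0 = x0"
proof -
  let ?f = "closed_loop l1 l2 us dl eps bt"
  define w0 where "w0 = Wf l1 l2 eps x0"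
  define R0 where "R0 = max (l1 * w0 + 1) (w0 / ((1+eps)*l2) + 1)"
  define R where "R = R0 + 1"
  have R0: "R0 \<ge> 0" unfolding R0_def w0_def using W_radial(1)[OF l1 l2 eps, of x0] by simp
  have Rp: "R > 0" unfolding R_def using R0 by simp
  have sub: "\<bar>fst \<eta>\<bar> \<le> R0 \<and> \<bar>snd \<eta>\<bar> \<le> R0" if "Wf l1 l2 eps \<eta> \<le> w0" for \<eta>
  proof -
    have "l1 * Wf l1 l2 eps \<eta> \<le> l1 * w0" using that l1 by simp
    moreover have "Wf l1 l2 eps \<eta> / ((1+eps)*l2) \<le> w0 / ((1+eps)*l2)" using that l2 eps
      by (intro divide_right_mono) auto
    ultimately show ?thesis using W_radial[OF l1 l2 eps, of \<eta>] unfolding R0_def by auto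
  qed
  obtain Lf where Lf: "Lf > 0" and lipf: "\<And>a b. \<bar>fst a\<bar> \<le> R \<Longrightarrow> \<bar>snd a\<bar> \<le> R \<Longrightarrow> \<bar>fst b\<bar> \<le> R \<Longrightarrow> \<bar>snd b\<bar> \<le> R \<Longrightarrow>
     norm (?f a - ?f b) \<le> Lf * norm (a - b)"
    using f_lip[OF l1 l2 eps dl bt, of R us] by blast
  define g where "g \<eta> = ?f (clip R \<eta>)" for \<eta>
  have inb: "\<bar>fst (clip R \<eta>)\<bar> \<le> R" "\<bar>snd (clip R \<eta>)\<bar> \<le> R" for \<eta>
    unfolding clip_def using cl_bound Rp by auto
  have lipg: "norm (g a - g b) \<le> Lf * norm (a - b)" for a b
  proof -
    have "norm (g a - g b) \<le> Lf * norm (clip R a - clip R b)" unfolding g_def by (rule lipf[OF inb inb])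
    also have "\<dots> \<le> Lf * norm (a - b)" using clip_lip Rp Lf by (intro mult_left_mono) auto
    finally show ?thesis .
  qed
  have bndg: "norm (g a) \<le> Lf * (2 * R)" for a
  proof -
    have z: "(0::real \<times> real) = (0, 0)" by (simp add: zero_prod_def)
    have f0: "?f 0 = 0" unfolding z by (rule f_zero)
    have "norm (g a) = norm (?f (clip R a) - ?f 0)" unfolding g_def f0 by simp
    also have "\<dots> \<le> Lf * norm (clip R a - 0)" by (rule lipf[OF inb(1) inb(2)]) (use Rp in auto)
    also have "\<dots> \<le> Lf * (2 * R)" using clip_norm Rp Lf by (intro mult_left_mono) auto
    finally show ?thesis .
  qed
  obtain X where X0: "X 0 = x0" and hX: "\<And>t. t \<ge> 0 \<Longrightarrow> (X has_vector_derivative g (X t)) (at t within {0..})"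
    using global_exist[OF lipg Lf bndg, of x0] by blast
  have gf: "g \<eta> = ?f \<eta>" if "\<bar>fst \<eta>\<bar> \<le> R" "\<bar>snd \<eta>\<bar> \<le> R" for \<eta>
    unfolding g_def clip_def using cl_id that by simp
  have Xc: "continuous_on {0..} X"
    unfolding continuous_on_eq_continuous_within using hX by (auto intro: has_vector_derivative_continuous)
  define B where "B = {t. 0 \<le> t \<and> \<not> (\<bar>fst (X t)\<bar> < R \<and> \<bar>snd (X t)\<bar> < R)}"
  have Bempty: "B = {}"
  proof (rule ccontr)
    assume ne: "B \<noteq> {}"
    have bdd: "bdd_below B" unfolding B_def by (rule bdd_belowI[of _ 0]) auto
    define ts where "ts = Inf B"
    have ts0: "ts \<ge> 0" unfolding ts_def using ne by (intro cInf_greatest) (auto simp: B_def)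
    have before: "\<bar>fst (X s)\<bar> < R \<and> \<bar>snd (X s)\<bar> < R" if "0 \<le> s" "s < ts" for s
    proof (rule ccontr)
      assume "\<not> ?thesis"
      hence "s \<in> B" unfolding B_def using that by auto
      hence "ts \<le> s" unfolding ts_def using bdd by (rule cInf_lower)
      thus False using that by simp
    qed
    have Wts: "Wf l1 l2 eps (X ts) \<le> w0"
    proof -
      have "Wf l1 l2 eps (X ts) \<le> Wf l1 l2 eps (X 0)"
      proof (rule nonincr_from_deriv[OF _ _ ts0])
        fix s :: real assume "s \<ge> 0"
        thus "\<exists>D. ((\<lambda>t. Wf l1 l2 eps (X t)) has_real_derivative D) (at s within {0..})"
          using W_deriv[OF hX l1] by blast
      next
        fix s :: real assume s: "s > 0" "s < ts"
        have "at s within {0..} = at s" by (rule at_within_interior) (use s in simp)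
        hence d: "(X has_vector_derivative g (X s)) (at s)" using hX[of s] s by simp
        have "g (X s) = ?f (X s)" using before[of s] s by (intro gf) auto
        hence d: "(X has_vector_derivative ?f (X s)) (at s)" using d by simp
        show "\<exists>D. ((\<lambda>t. Wf l1 l2 eps (X t)) has_real_derivative D) (at s) \<and> D \<le> 0"
          using W_deriv[OF d l1] W_dot_nonpos[OF l1 l2 eps dl bt] by blast
      qed
      thus ?thesis unfolding w0_def X0 .
    qed
    hence Xts: "\<bar>fst (X ts)\<bar> \<le> R0" "\<bar>snd (X ts)\<bar> \<le> R0" using sub by auto
    have "continuous (at ts within {0..}) X" using Xc ts0 unfolding continuous_on_eq_continuous_within by auto
    then obtain \<delta> where \<delta>: "\<delta> > 0" "\<And>s. s \<in> {0..} \<Longrightarrow> dist s ts < \<delta> \<Longrightarrow> dist (X s) (X ts) < 1"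
      unfolding continuous_within_eps_delta by (meson zero_less_one)
    have "Inf B < ts + \<delta>" unfolding ts_def using \<delta> by simp
    then obtain b where b: "b \<in> B" "b < ts + \<delta>" using cInf_less_iff[OF ne bdd] by auto
    have b0: "b \<ge> ts" unfolding ts_def using b(1) bdd by (rule cInf_lower)
    have "dist b ts < \<delta>" using b b0 by (simp add: dist_real_def)
    hence "dist (X b) (X ts) < 1" using \<delta>(2)[of b] b0 ts0 by simp
    hence "\<bar>fst (X b) - fst (X ts)\<bar> < 1" "\<bar>snd (X b) - snd (X ts)\<bar> < 1"
      using dist_fst_le[of "X b" "X ts"] dist_snd_le[of "X b" "X ts"] by (auto simp: dist_real_def)
    hence "\<bar>fst (X b)\<bar> < R" "\<bar>snd (X b)\<bar> < R" using Xts unfolding R_def by linarith+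
    thus False using b(1) unfolding B_def by auto
  qed
  have "is_solution ?f X"
    unfolding is_solution_def
  proof (intro allI impI)
    fix t :: real assume t: "t \<ge> 0"
    have "\<bar>fst (X t)\<bar> < R \<and> \<bar>snd (X t)\<bar> < R" using Bempty t unfolding B_def by auto
    hence "g (X t) = ?f (X t)" by (intro gf) auto
    thus "(X has_vector_derivative ?f (X t)) (at t within {0..})" using hX[OF t] by simp
  qed
  thus ?thesis using X0 by blast
qed


lemma exp_decay_tendsto:
  fixes k :: real assumes "k > 0"
  shows "((\<lambda>t. C * exp (- k * t)) \<longlongrightarrow> 0) at_top"
proof -
  have "filterlim (\<lambda>t. k * t) at_top at_top"
    by (rule filterlim_tendsto_pos_mult_at_top[OF tendsto_const assms filterlim_ident])
  hence "filterlim (\<lambda>t. - (k * t)) at_bot at_top"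
    by (simp add: filterlim_uminus_at_top)
  hence "((\<lambda>t. exp (- (k * t))) \<longlongrightarrow> 0) at_top"
    by (rule filterlim_compose[OF exp_at_bot])
  hence "((\<lambda>t. C * exp (- (k * t))) \<longlongrightarrow> C * 0) at_top" by (intro tendsto_mult tendsto_const)
  thus ?thesis by simp
qed

lemma feedback_pos:
  assumes "l2 > 0" "us > 0" "dl > 0" "eps > 0" "bt \<ge> 0" "eps * l2 + bt < us"
  shows "feedback l1 l2 us dl eps bt \<eta> > 0"
proof -
  have "phi2 l2 (snd \<eta>) > - l2" unfolding phi2_def using assms(1) by (simp add: algebra_simps)
  hence a: "eps * phi2 l2 (snd \<eta>) > eps * (- l2)" using assms(4) by (intro mult_strict_left_mono) auto
  have "bt * sat dl (varphi l1 l2 eps \<eta>) \<ge> bt * (-1)"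
    using less_imp_le[OF sat_gt[OF assms(3)]] assms(5) by (intro mult_left_mono) auto
  thus ?thesis unfolding feedback_eq using a assms(6) by simp
qed

lemma decay_W:
  fixes l1 l2 eps dl bt us w :: real
  assumes l1: "l1 > 0" and l2: "l2 > 0" and eps: "eps > 0" and dl: "dl > 0" and bt: "bt \<ge> 0"
  obtains M k where "M > 0" "k > 0"
    "\<And>x t. is_solution (closed_loop l1 l2 us dl eps bt) x \<Longrightarrow> Wf l1 l2 eps (x 0) \<le> w \<Longrightarrow> t \<ge> 0 \<Longrightarrow>
       norm (x t) \<le> M * exp (- k * t) * norm (x 0)"
proof -
  define R where "R = max 1 (max (l1 * w + 1) (w / ((1+eps)*l2) + 1))"
  have R: "R > 0" unfolding R_def by simp
  obtain M k where Mk: "M > 0" "k > 0"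
    and dec: "\<And>x t. is_solution (closed_loop l1 l2 us dl eps bt) x \<Longrightarrow>
       (\<And>t. t \<ge> 0 \<Longrightarrow> \<bar>fst (x t)\<bar> \<le> R \<and> \<bar>snd (x t)\<bar> \<le> R) \<Longrightarrow> t \<ge> 0 \<Longrightarrow>
       norm (x t) \<le> M * exp (- k * t) * norm (x 0)"
    using exp_decay[OF l1 l2 eps dl bt R, where us=us] by blast
  show ?thesis
  proof (rule that[OF Mk])
    fix x :: "real \<Rightarrow> real \<times> real" and t :: real
    assume sol: "is_solution (closed_loop l1 l2 us dl eps bt) x" and w: "Wf l1 l2 eps (x 0) \<le> w" and t: "t \<ge> 0"
    show "norm (x t) \<le> M * exp (- k * t) * norm (x 0)"
    proof (rule dec[OF sol _ t])
      fix s :: real assume s: "s \<ge> 0"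
      have Ws: "Wf l1 l2 eps (x s) \<le> w" using W_nonincr[OF l1 l2 eps dl bt sol s] w by linarith
      have "l1 * Wf l1 l2 eps (x s) \<le> l1 * w" using Ws l1 by simp
      moreover have "Wf l1 l2 eps (x s) / ((1+eps)*l2) \<le> w / ((1+eps)*l2)" using Ws l2 eps
        by (intro divide_right_mono) auto
      ultimately show "\<bar>fst (x s)\<bar> \<le> R \<and> \<bar>snd (x s)\<bar> \<le> R"
        using W_radial[OF l1 l2 eps, of "x s"] unfolding R_def by auto
    qed
  qed
qed

theorem theorem3:
  fixes l1 l2 us dl eps bt :: real
  assumes "l1 > 0" and "l2 > 0" and "us > 0" and "dl > 0" and "eps > 0" and "bt \<ge> 0"
    and "eps * l2 + bt < us"
  shows "GAS_origin (closed_loop l1 l2 us dl eps bt)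
     \<and> LES_origin (closed_loop l1 l2 us dl eps bt)
     \<and> (\<forall>x. is_solution (closed_loop l1 l2 us dl eps bt) x \<longrightarrow>
           (\<forall>t\<ge>0. feedback l1 l2 us dl eps bt (x t) > 0))"
proof -
  note l1 = assms(1) and l2 = assms(2) and dl = assms(4) and eps = assms(5) and bt = assms(6)
  let ?f = "closed_loop l1 l2 us dl eps bt"
  define W1 where "W1 = exp 1 / (2*l1) + (1+eps)*l2*exp 1/2"
  obtain M k where Mk: "M > 0" "k > 0"
    and dec: "\<And>x t. is_solution ?f x \<Longrightarrow> Wf l1 l2 eps (x 0) \<le> W1 \<Longrightarrow> t \<ge> 0 \<Longrightarrow>
       norm (x t) \<le> M * exp (- k * t) * norm (x 0)"
    using decay_W[OF l1 l2 eps dl bt, where us=us and w=W1] by blast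
  have small: "Wf l1 l2 eps \<eta> \<le> W1" if "norm \<eta> < 1" for \<eta>
  proof -
    have "(norm \<eta>)\<^sup>2 < 1" using that by (simp add: abs_square_less_1)
    hence n: "(fst \<eta>)\<^sup>2 + (snd \<eta>)\<^sup>2 < 1" unfolding norm_sq .
    hence a: "(fst \<eta>)\<^sup>2 \<le> 1" "(snd \<eta>)\<^sup>2 \<le> 1" by (smt (verit) zero_le_power2)+
    hence b: "\<bar>fst \<eta>\<bar> \<le> 1" "\<bar>snd \<eta>\<bar> \<le> 1" by (simp_all add: abs_square_le_1)
    have "Wf l1 l2 eps \<eta> \<le> exp 1 / (2*l1) * (fst \<eta>)\<^sup>2 + (1+eps)*l2*exp 1/2 * (snd \<eta>)\<^sup>2"
      by (rule W_bounds(2)[OF l1 l2 eps b])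
    also have "\<dots> \<le> exp 1 / (2*l1) * 1 + (1+eps)*l2*exp 1/2 * 1"
      using a l1 l2 eps by (intro add_mono mult_left_mono) auto
    finally show ?thesis unfolding W1_def by simp
  qed
  have LES: "LES_origin ?f"
    unfolding LES_origin_def
  proof -
    have "\<forall>x. is_solution ?f x \<and> norm (x 0) < 1 \<longrightarrow> (\<forall>t\<ge>0. norm (x t) \<le> M * exp (- k * t) * norm (x 0))"
      using dec small by blast
    thus "\<exists>r>0. \<exists>M>0. \<exists>k>0. \<forall>x. is_solution ?f x \<and> norm (x 0) < r \<longrightarrow>
        (\<forall>t\<ge>0. norm (x t) \<le> M * exp (- k * t) * norm (x 0))"
      using Mk zero_less_one by blast
  qed
  have stab: "\<exists>d>0. \<forall>x. is_solution ?f x \<and> norm (x 0) < d \<longrightarrow> (\<forall>t\<ge>0. norm (x t) < e)" if e: "e > 0" for e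
  proof (intro exI[of _ "min 1 (e / M)"] conjI allI impI)
    show "min 1 (e / M) > 0" using e Mk by simp
  next
    fix x t assume h: "is_solution ?f x \<and> norm (x 0) < min 1 (e / M)" and t: "(t::real) \<ge> 0"
    have "norm (x t) \<le> M * exp (- k * t) * norm (x 0)" using dec[of x t] h small t by auto
    also have "\<dots> \<le> M * 1 * norm (x 0)" using Mk t by (intro mult_right_mono mult_left_mono) auto
    also have "\<dots> < M * (e / M)"
    proof -
      have "norm (x 0) < e / M" using h by simp
      hence "M * norm (x 0) < M * (e / M)" using Mk by (intro mult_strict_left_mono) auto
      thus ?thesis by simp
    qed
    also have "\<dots> = e" using Mk by simp
    finally show "norm (x t) < e" .
  qed
  have conv: "(x \<longlongrightarrow> 0) at_top" if sol: "is_solution ?f x" for x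
  proof -
    obtain M' k' where Mk': "M' > 0" "k' > 0"
      and dec': "\<And>y t. is_solution ?f y \<Longrightarrow> Wf l1 l2 eps (y 0) \<le> Wf l1 l2 eps (x 0) \<Longrightarrow> t \<ge> 0 \<Longrightarrow>
       norm (y t) \<le> M' * exp (- k' * t) * norm (y 0)"
      using decay_W[OF l1 l2 eps dl bt, where us=us and w="Wf l1 l2 eps (x 0)"] by blast
    have ev: "eventually (\<lambda>t. norm (x t) \<le> (M' * norm (x 0)) * exp (- k' * t)) at_top"
      using eventually_ge_at_top[of 0]
    proof eventually_elim
      case (elim t) thus ?case using dec'[OF sol order_refl elim] by (simp add: algebra_simps)
    qed
    show ?thesis by (rule Lim_null_comparison[OF ev exp_decay_tendsto[OF Mk'(2)]])
  qed
  have GAS: "GAS_origin ?f"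
    unfolding GAS_origin_def using exists_sol[OF l1 l2 eps dl bt] stab conv by blast
  have pos: "\<forall>x. is_solution ?f x \<longrightarrow> (\<forall>t\<ge>0. feedback l1 l2 us dl eps bt (x t) > 0)"
    using feedback_pos[OF l2 assms(3) dl eps bt assms(7)] by blast
  show ?thesis using GAS LES pos by blast
qed


end
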